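(* For every $p\in\mathbb{N}$ and $A,B\in\mathbb{R}^{n\times n}$: (i) $\|AB\|_{b,p}\le\|A\|_{S_\infty}\|B\|_{b,p}$; (ii) $\|A\|_{S_\infty}\le\|A\|_{b,p}$, and $\|A\|_{b,\infty}=\|A\|_{S_\infty}$; (iii) $\|A\|_{b,p}\le m^{1/p}\|A\|_{S_\infty}$; (iv) if $C\in\mathbb{R}^{n\times n}$ is block upper triangular with $C(0{:}j,j)=B_jA(0{:}j,j)$ for some $B_j\in\mathbb{R}^{n_{j+1}\times n_{j+1}}$, $j=0,\dots,m-1$, then $\|C\|_{b,2}\le\big(\max_{j=0,\dots,m-1}\|B_j\|_{S_\infty}\big)\|A\|_{b,2}$.
   Context: Fix a block structure $0=n_0<n_1<\dots<n_m=n$. Block $(i,j)$, $0\le i,j\le m-1$, of a matrix in $\mathbb{R}^{n\times n}$ consists of rows $n_i+1..n_{i+1}$ and columns $n_j+1..n_{j+1}$; $A(0{:}j,j)$ denotes the block column $j$ restricted to block rows $0..j$ (an $n_{j+1}\times(n_{j+1}-n_j)$ matrix). $\mathcal{D}_b\subset\mathbb{R}^{n\times m}$ is the set of $X$ with $X_{ij}=0$ whenever $i\notin[n_{j-1}+1,n_j]$. For $p\in\mathbb{N}\cup\{\infty\}$, $\|A\|_{b,p}:=\sup\{\|AX\|_{S_p}:X\in\mathcal{D}_b,\ \|X\|_{S_\infty}\le1\}$, where $\|\cdot\|_{S_p}$ is the Schatten $p$-norm (sum of $p$-th powers of singular values to the power $1/p$; $S_\infty$ is the spectral norm). *)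

theory Defs
  imports "Jordan_Normal_Form.Char_Poly" "HOL-Computational_Algebra.Polynomial"
begin

(* A^T A is symmetric PSD, so its char. polynomial
   splits over the reals. *)
definition singular_values :: "real mat \<Rightarrow> real multiset" where
  "singular_values A = image_mset sqrt (proots (char_poly (transpose_mat A * A)))"

definition schatten_norm :: "nat \<Rightarrow> real mat \<Rightarrow> real" where
  "schatten_norm p A = (\<Sum>\<^sub># (image_mset (\<lambda>s. s ^ p) (singular_values A))) powr (1 / real p)"

(* Schatten infinity norm = spectral norm = largest singular value (0 if none) *)
definition spectral_norm :: "real mat \<Rightarrow> real" where
  "spectral_norm A = Max (insert 0 (set_mset (singular_values A)))"

definition block_structure :: "nat \<Rightarrow> nat \<Rightarrow> (nat \<Rightarrow> nat) \<Rightarrow> bool" where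
  "block_structure n m nb \<longleftrightarrow> nb 0 = 0 \<and> (\<forall>j<m. nb j < nb (Suc j)) \<and> nb m = n"

(* D_b: n x m matrices whose column j (0-based) is supported on the rows of block j,
   i.e. rows nb j .. nb (j+1) - 1 (0-based) *)
definition Db :: "nat \<Rightarrow> nat \<Rightarrow> (nat \<Rightarrow> nat) \<Rightarrow> real mat set" where
  "Db n m nb = {X \<in> carrier_mat n m.
      \<forall>i<n. \<forall>j<m. \<not> (nb j \<le> i \<and> i < nb (Suc j)) \<longrightarrow> X $$ (i, j) = 0}"

definition block_norm :: "nat \<Rightarrow> nat \<Rightarrow> (nat \<Rightarrow> nat) \<Rightarrow> nat \<Rightarrow> real mat \<Rightarrow> real" where
  "block_norm n m nb p A =
     Sup {schatten_norm p (A * X) | X. X \<in> Db n m nb \<and> spectral_norm X \<le> 1}"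

definition block_norm_inf :: "nat \<Rightarrow> nat \<Rightarrow> (nat \<Rightarrow> nat) \<Rightarrow> real mat \<Rightarrow> real" where
  "block_norm_inf n m nb A =
     Sup {spectral_norm (A * X) | X. X \<in> Db n m nb \<and> spectral_norm X \<le> 1}"

(* A(0:j, j): block column j restricted to block rows 0..j, an
   nb(j+1) x (nb(j+1) - nb j) matrix *)
definition block_col_upper :: "(nat \<Rightarrow> nat) \<Rightarrow> nat \<Rightarrow> real mat \<Rightarrow> real mat" where
  "block_col_upper nb j A =
     mat (nb (Suc j)) (nb (Suc j) - nb j) (\<lambda>(i, c). A $$ (i, nb j + c))"

definition block_upper_triangular :: "nat \<Rightarrow> nat \<Rightarrow> (nat \<Rightarrow> nat) \<Rightarrow> real mat \<Rightarrow> bool" where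
  "block_upper_triangular n m nb C \<longleftrightarrow>
     (\<forall>r<m. \<forall>s<m. s < r \<longrightarrow>
        (\<forall>i c. nb r \<le> i \<and> i < nb (Suc r) \<and> nb s \<le> c \<and> c < nb (Suc s) \<longrightarrow> C $$ (i, c) = 0))"

end

theory Submission
  imports Defs
begin


lemma sym_real_eigenvalue:
  fixes S :: "real mat"
  assumes S: "S \<in> carrier_mat n n" and sym: "transpose_mat S = S" and n: "0 < n"
  shows "\<exists>d. eigenvalue S d"
proof -
  define Sc where "Sc = map_mat (of_real :: real \<Rightarrow> complex) S"
  have Sc: "Sc \<in> carrier_mat n n" using S unfolding Sc_def by auto
  from char_poly_factorized[OF Sc] obtain as where
    cp: "char_poly Sc = (\<Prod>a\<leftarrow>as. [:- a, 1:])" and len: "length as = n" by auto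
  define z where "z = as ! 0"
  have "z \<in> set as" using len n unfolding z_def by auto
  hence "poly (char_poly Sc) z = 0" unfolding cp by (rule linear_poly_root)
  hence "eigenvalue Sc z" using eigenvalue_root_char_poly[OF Sc] by simp
  then obtain w where ev: "eigenvector Sc w z" unfolding eigenvalue_def by auto
  hence w: "w \<in> carrier_vec n" and w0: "w \<noteq> 0\<^sub>v n" and Sw: "Sc *\<^sub>v w = z \<cdot>\<^sub>v w"
    unfolding eigenvector_def using Sc by auto
  have Sij: "\<And>i j. i < n \<Longrightarrow> j < n \<Longrightarrow> S $$ (j, i) = S $$ (i, j)"
    using sym S by (metis carrier_matD index_transpose_mat(1))
  have comp: "\<And>i. i < n \<Longrightarrow> (\<Sum>j<n. of_real (S $$ (i,j)) * w $ j) = z * w $ i"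
  proof -
    fix i assume i: "i < n"
    have "(Sc *\<^sub>v w) $ i = z * w $ i" using Sw i w by simp
    moreover have "(Sc *\<^sub>v w) $ i = (\<Sum>j<n. of_real (S $$ (i,j)) * w $ j)"
      using i Sc S w unfolding Sc_def by (auto simp: scalar_prod_def row_def lessThan_atLeast0)
    ultimately show "(\<Sum>j<n. of_real (S $$ (i,j)) * w $ j) = z * w $ i" by simp
  qed
  define q where "q = (\<Sum>i<n. \<Sum>j<n. of_real (S $$ (i,j)) * cnj (w $ i) * w $ j)"
  define N where "N = (\<Sum>i<n. cnj (w $ i) * w $ i)"
  have qN: "q = z * N"
  proof -
    have "q = (\<Sum>i<n. cnj (w $ i) * (\<Sum>j<n. of_real (S $$ (i,j)) * w $ j))"
      unfolding q_def by (simp add: sum_distrib_left mult_ac)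
    also have "\<dots> = (\<Sum>i<n. cnj (w $ i) * (z * w $ i))" using comp by simp
    also have "\<dots> = z * N" unfolding N_def by (simp add: sum_distrib_left mult_ac)
    finally show ?thesis .
  qed
  have "cnj q = (\<Sum>i<n. \<Sum>j<n. of_real (S $$ (i,j)) * w $ i * cnj (w $ j))"
    unfolding q_def by (simp add: mult_ac)
  also have "\<dots> = (\<Sum>j<n. \<Sum>i<n. of_real (S $$ (i,j)) * w $ i * cnj (w $ j))"
    by (rule sum.swap)
  also have "\<dots> = q" unfolding q_def
    by (intro sum.cong refl, auto simp: Sij mult_ac)
  finally have cq: "cnj q = q" .
  have NR: "N = of_real (\<Sum>i<n. (cmod (w $ i))^2)"
    unfolding N_def of_real_sum complex_norm_square by (simp only: mult.commute)
  have "\<exists>i<n. w $ i \<noteq> 0" using w0 w by (metis eq_vecI carrier_vecD index_zero_vec(1,2))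
  then obtain i0 where i0: "i0 < n" "w $ i0 \<noteq> 0" by auto
  have "(cmod (w $ i0))^2 \<le> (\<Sum>i<n. (cmod (w $ i))^2)"
    using i0 by (intro member_le_sum) auto
  moreover have "(cmod (w $ i0))^2 > 0" using i0 by simp
  ultimately have Npos: "(\<Sum>i<n. (cmod (w $ i))^2) > 0" by linarith
  have "Im q = 0" using arg_cong[OF cq, of Im] by simp
  hence "Im z * (\<Sum>i<n. (cmod (w $ i))^2) = 0" unfolding qN NR by simp
  hence Imz: "Im z = 0" using Npos by simp
  define r where "r = Re z"
  have zr: "z = of_real r" using Imz unfolding r_def by (simp add: complex_eq_iff)
  have "of_real (poly (char_poly S) r) = poly (char_poly Sc) z"
    unfolding zr Sc_def of_real_hom.char_poly_hom[OF S] of_real_hom.poly_map_poly ..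
  also have "\<dots> = 0" by fact
  finally have "poly (char_poly S) r = 0" by simp
  thus ?thesis using eigenvalue_root_char_poly[OF S] by blast
qed


definition orth :: "nat \<Rightarrow> real mat \<Rightarrow> bool" where
  "orth n Q \<longleftrightarrow> Q \<in> carrier_mat n n \<and> transpose_mat Q * Q = 1\<^sub>m n"

lemma orthD: assumes "orth n Q"
  shows "Q \<in> carrier_mat n n" "transpose_mat Q * Q = 1\<^sub>m n" "Q * transpose_mat Q = 1\<^sub>m n"
  using assms mat_mult_left_right_inverse[of "transpose_mat Q" n Q] unfolding orth_def by auto

definition outer :: "nat \<Rightarrow> real vec \<Rightarrow> real mat" where
  "outer n w = mat n n (\<lambda>(i,j). w $ i * w $ j)"

lemma householder:
  assumes u: "u \<in> carrier_vec n" and uu: "u \<bullet> u = 1"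
  shows "\<exists>Q. orth n Q \<and> (\<forall>i<n. Q $$ (i,0) = u $ i)"
proof (cases "u $ 0 = 1")
  case True
  have n: "n > 0" using u uu by (cases n, auto simp: scalar_prod_def)
  have "(\<Sum>i\<in>{0..<n}. u $ i * u $ i) = u $ 0 * u $ 0 + (\<Sum>i\<in>{1..<n}. u $ i * u $ i)"
    by (subst sum.atLeast_Suc_lessThan[OF n]) simp
  hence s: "(\<Sum>i\<in>{1..<n}. (u $ i)^2) = 0" using uu True u by (simp add: scalar_prod_def power2_eq_square)
  have "\<forall>i\<in>{1..<n}. (u $ i)^2 = 0" using s by (subst (asm) sum_nonneg_eq_0_iff) auto
  hence z: "\<And>i. 0 < i \<Longrightarrow> i < n \<Longrightarrow> u $ i = 0" by auto
  show ?thesis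
    by (rule exI[of _ "1\<^sub>m n"], auto simp: orth_def True z)
next
  case False
  define w where "w = unit_vec n 0 - u"
  have n: "n > 0" using u uu by (cases n, auto simp: scalar_prod_def)
  have w: "w \<in> carrier_vec n" using u unfolding w_def by auto
  have w0: "w $ 0 = 1 - u $ 0" using n u unfolding w_def by auto
  have wi: "\<And>i. i < n \<Longrightarrow> w $ i = (if i = 0 then 1 else 0) - u $ i" using u unfolding w_def by auto
  have ww: "w \<bullet> w = 2 - 2 * u $ 0"
  proof -
    have "w \<bullet> w = (\<Sum>i<n. ((if i = 0 then 1 else 0) - u $ i) * ((if i = 0 then 1 else 0) - u $ i))"
      using w wi by (auto simp: scalar_prod_def lessThan_atLeast0 intro!: sum.cong)
    also have "\<dots> = (\<Sum>i<n. (if i = 0 then 1 else 0) - 2 * (if i = 0 then u $ i else 0) + u $ i * u $ i)"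
      by (intro sum.cong refl) (auto simp: algebra_simps)
    also have "\<dots> = 1 - 2 * u $ 0 + (\<Sum>i<n. u $ i * u $ i)"
      using n by (simp add: sum.distrib sum_subtractf sum_distrib_left[symmetric])
    also have "(\<Sum>i<n. u $ i * u $ i) = 1" using uu u by (simp add: scalar_prod_def lessThan_atLeast0)
    finally show ?thesis by simp
  qed
  have u0: "u $ 0 \<noteq> 1" using False .
  define c where "c = 2 / (w \<bullet> w)"
  have cw0: "c * w $ 0 = 1" unfolding c_def ww w0 using u0 by (simp add: field_simps)
  have cww: "c * (w \<bullet> w) = 2" unfolding c_def ww using u0 by (simp add: field_simps)
  define Q where "Q = mat n n (\<lambda>(i,j). (if i = j then 1 else 0) - c * w $ i * w $ j)"
  have Q: "Q \<in> carrier_mat n n" unfolding Q_def by auto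
  have QT: "transpose_mat Q = Q" unfolding Q_def by (rule eq_matI, auto simp: mult_ac)
  have QQ: "Q * Q = 1\<^sub>m n"
  proof (rule eq_matI)
    fix i j assume i: "i < dim_row (1\<^sub>m n)" and j: "j < dim_col (1\<^sub>m n)"
    hence i: "i < n" and j: "j < n" by auto
    have "(Q * Q) $$ (i,j) = (\<Sum>k<n. ((if i = k then 1 else 0) - c * w $ i * w $ k) * ((if k = j then 1 else 0) - c * w $ k * w $ j))"
      using i j unfolding Q_def by (auto simp: scalar_prod_def lessThan_atLeast0 intro!: sum.cong)
    also have "\<dots> = (\<Sum>k<n. (if i = k then (if k = j then 1 else 0) else 0) - (if i = k then c * w $ k * w $ j else 0)
        - (if k = j then c * w $ i * w $ k else 0) + (c * c * w $ i * w $ j) * (w $ k * w $ k))"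
      by (intro sum.cong refl) (auto simp: algebra_simps)
    also have "\<dots> = (if i = j then 1 else 0) - c * w $ i * w $ j - c * w $ i * w $ j + (c * c * w $ i * w $ j) * (\<Sum>k<n. w $ k * w $ k)"
      using i j by (simp add: sum.distrib sum_subtractf sum_distrib_left[symmetric])
    also have "(\<Sum>k<n. w $ k * w $ k) = w \<bullet> w" using w by (simp add: scalar_prod_def lessThan_atLeast0)
    also have "(c * c * w $ i * w $ j) * (w \<bullet> w) = 2 * c * w $ i * w $ j" using cww
      by (metis (no_types, opaque_lifting) mult.assoc mult.commute)
    finally show "(Q * Q) $$ (i,j) = 1\<^sub>m n $$ (i,j)" using i j by simp
  qed (use Q in auto)
  show ?thesis
  proof (intro exI conjI allI impI)
    show "orth n Q" unfolding orth_def QT using Q QQ by auto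
    fix i assume i: "i < n"
    have "Q $$ (i,0) = (if i = 0 then 1 else 0) - w $ i * (c * w $ 0)" using i n unfolding Q_def by auto
    also have "\<dots> = u $ i" unfolding cw0 using wi[OF i] by simp
    finally show "Q $$ (i,0) = u $ i" .
  qed
qed


definition dg :: "nat \<Rightarrow> (nat \<Rightarrow> real) \<Rightarrow> real mat" where
  "dg n d = mat n n (\<lambda>(i,j). if i = j then d i else 0)"

lemma dg_carrier[simp]: "dg n d \<in> carrier_mat n n" unfolding dg_def by auto
lemma dg_index[simp]: "i < n \<Longrightarrow> j < n \<Longrightarrow> dg n d $$ (i,j) = (if i = j then d i else 0)"
  unfolding dg_def by auto
lemma dg_dims[simp]: "dim_row (dg n d) = n" "dim_col (dg n d) = n" unfolding dg_def by auto

lemma orth_mult: "orth n P \<Longrightarrow> orth n Q \<Longrightarrow> orth n (P * Q)"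
proof -
  assume P: "orth n P" and Q: "orth n Q"
  note PP = orthD[OF P] and QQ = orthD[OF Q]
  have "transpose_mat (P * Q) * (P * Q) = transpose_mat Q * (transpose_mat P * (P * Q))"
    using PP QQ by (simp add: transpose_mult[of _ n n _ n] assoc_mult_mat[of _ n n _ n _ n])
  also have "transpose_mat P * (P * Q) = (transpose_mat P * P) * Q"
    by (rule assoc_mult_mat[symmetric], insert PP QQ, auto)
  also have "\<dots> = Q" using PP QQ by simp
  also have "transpose_mat Q * Q = 1\<^sub>m n" using QQ by simp
  finally show ?thesis using PP QQ unfolding orth_def by auto
qed

lemma vv_eq: "(v :: real vec) \<in> carrier_vec n \<Longrightarrow> v \<bullet> v = (\<Sum>i<n. (v $ i)^2)"
  by (simp add: scalar_prod_def lessThan_atLeast0 power2_eq_square)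

lemma vv_ge0: "(v :: real vec) \<bullet> v \<ge> 0"
  by (simp add: scalar_prod_def sum_nonneg)

lemma vv_pos: assumes v: "(v :: real vec) \<in> carrier_vec n" and v0: "v \<noteq> 0\<^sub>v n" shows "v \<bullet> v > 0"
proof -
  have "\<exists>i<n. v $ i \<noteq> 0" using v0 v by (metis eq_vecI carrier_vecD index_zero_vec(1,2))
  then obtain i0 where i0: "i0 < n" "v $ i0 \<noteq> 0" by auto
  have "(v $ i0)^2 \<le> (\<Sum>i<n. (v $ i)^2)" using i0 by (intro member_le_sum) auto
  moreover have "(v $ i0)^2 > 0" using i0 by simp
  ultimately show ?thesis unfolding vv_eq[OF v] by linarith
qed

lemma bd_mult:
  fixes A B C D :: "real mat"
  assumes A: "A \<in> carrier_mat 1 1" and B: "B \<in> carrier_mat 1 1"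
    and C: "C \<in> carrier_mat k k" and D: "D \<in> carrier_mat k k"
  shows "four_block_mat A (0\<^sub>m 1 k) (0\<^sub>m k 1) C * four_block_mat B (0\<^sub>m 1 k) (0\<^sub>m k 1) D
     = four_block_mat (A * B) (0\<^sub>m 1 k) (0\<^sub>m k 1) (C * D)"
  by (subst mult_four_block_mat[OF A zero_carrier_mat zero_carrier_mat C B zero_carrier_mat zero_carrier_mat D],
      insert A B C D, simp)

lemma assoc5:
  assumes A: "A \<in> carrier_mat n n" and B: "B \<in> carrier_mat n n" and C: "C \<in> carrier_mat n n"
    and D: "D \<in> carrier_mat n n" and E: "E \<in> carrier_mat n n"
  shows "A * (B * C * D) * E = (A * B) * C * (D * E)"
proof -
  have BCD: "B * C * D \<in> carrier_mat n n" using B C D by auto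
  have "A * (B * C * D) * E = A * ((B * C * D) * E)" by (rule assoc_mult_mat[OF A BCD E])
  also have "(B * C * D) * E = (B * C) * (D * E)" by (rule assoc_mult_mat, insert B C D E, auto)
  also have "A * ((B * C) * (D * E)) = (A * (B * C)) * (D * E)" by (rule assoc_mult_mat[symmetric], insert A B C D E, auto)
  also have "A * (B * C) = A * B * C" by (rule assoc_mult_mat[symmetric, OF A B C])
  finally show ?thesis .
qed

lemma sym_eigvec:
  fixes S :: "real mat"
  assumes S: "S \<in> carrier_mat n n" and sym: "transpose_mat S = S" and n: "0 < n"
  shows "\<exists>d u. u \<in> carrier_vec n \<and> u \<bullet> u = 1 \<and> S *\<^sub>v u = d \<cdot>\<^sub>v u"
proof -
  from sym_real_eigenvalue[OF S sym n] obtain d where "eigenvalue S d" by auto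
  then obtain v where "eigenvector S v d" unfolding eigenvalue_def by auto
  hence v: "v \<in> carrier_vec n" and v0: "v \<noteq> 0\<^sub>v n" and Sv: "S *\<^sub>v v = d \<cdot>\<^sub>v v"
    unfolding eigenvector_def using S by auto
  have vv: "v \<bullet> v > 0"
  proof -
    show ?thesis using vv_pos[OF v v0] .
  qed
  define u where "u = (1 / sqrt (v \<bullet> v)) \<cdot>\<^sub>v v"
  have u: "u \<in> carrier_vec n" using v unfolding u_def by auto
  have "u \<bullet> u = (1 / sqrt (v \<bullet> v)) * (1 / sqrt (v \<bullet> v)) * (v \<bullet> v)"
    unfolding u_def using v by (simp add: smult_scalar_prod_distrib[of _ n] scalar_prod_smult_distrib[of _ n] mult.assoc)
  also have "\<dots> = 1" using vv by (simp add: real_sqrt_mult[symmetric])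
  finally have uu: "u \<bullet> u = 1" .
  have "S *\<^sub>v u = d \<cdot>\<^sub>v u" unfolding u_def using S v Sv
    by (simp add: mult_mat_vec[of _ n n] smult_smult_assoc mult.commute)
  thus ?thesis using u uu by blast
qed

lemma spectral:
  fixes S :: "real mat"
  assumes "S \<in> carrier_mat n n" and "transpose_mat S = S"
  shows "\<exists>Q d. orth n Q \<and> S = Q * dg n d * transpose_mat Q"
  using assms
proof (induction n arbitrary: S)
  case 0
  show ?case by (rule exI[of _ "1\<^sub>m 0"], rule exI[of _ "\<lambda>_. 0"], insert 0, auto simp: orth_def)
next
  case (Suc k S)
  let ?n = "Suc k"
  have S: "S \<in> carrier_mat ?n ?n" and sym: "transpose_mat S = S" by fact+
  from sym_eigvec[OF S sym] obtain d0 u where u: "u \<in> carrier_vec ?n" and uu: "u \<bullet> u = 1"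
    and Su: "S *\<^sub>v u = d0 \<cdot>\<^sub>v u" by auto
  from householder[OF u uu] obtain Q1 where Q1o: "orth ?n Q1" and Q1u: "\<forall>i<?n. Q1 $$ (i,0) = u $ i" by auto
  note Q1 = orthD[OF Q1o]
  have colQ1: "col Q1 0 = u" using Q1u Q1 u by (intro eq_vecI) auto
  define T where "T = transpose_mat Q1 * S * Q1"
  have T: "T \<in> carrier_mat ?n ?n" unfolding T_def using Q1 S by auto
  have Tsym: "transpose_mat T = T" unfolding T_def using Q1 S sym
    by (simp add: transpose_mult[of _ ?n ?n _ ?n] assoc_mult_mat[of _ ?n ?n _ ?n _ ?n])
  have colT: "col T 0 = d0 \<cdot>\<^sub>v unit_vec ?n 0"
  proof -
    have "T = transpose_mat Q1 * (S * Q1)" unfolding T_def by (rule assoc_mult_mat, insert Q1 S, auto)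
    hence "col T 0 = col (transpose_mat Q1 * (S * Q1)) 0" by simp
    also have "\<dots> = transpose_mat Q1 *\<^sub>v col (S * Q1) 0" by (rule col_mult2, insert Q1 S, auto)
    also have "col (S * Q1) 0 = S *\<^sub>v col Q1 0" by (rule col_mult2, insert Q1 S, auto)
    finally have "col T 0 = transpose_mat Q1 *\<^sub>v (S *\<^sub>v col Q1 0)" .
    also have "\<dots> = d0 \<cdot>\<^sub>v (transpose_mat Q1 *\<^sub>v col Q1 0)" unfolding colQ1 Su using Q1 u
      by (simp add: mult_mat_vec[of _ ?n ?n])
    also have "transpose_mat Q1 *\<^sub>v col Q1 0 = col (transpose_mat Q1 * Q1) 0" 
      by (rule col_mult2[symmetric], insert Q1, auto)
    also have "\<dots> = unit_vec ?n 0" using Q1 by simp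
    finally show ?thesis .
  qed
  have T0: "T $$ (i,0) = (if i = 0 then d0 else 0)" if i: "i < ?n" for i
  proof -
    have "col T 0 $ i = (d0 \<cdot>\<^sub>v unit_vec ?n 0) $ i" using colT by simp
    thus ?thesis using i T by (auto simp: unit_vec_def)
  qed
  have T0': "\<And>j. j < ?n \<Longrightarrow> T $$ (0,j) = (if j = 0 then d0 else 0)"
    using T0 Tsym T by (metis carrier_matD index_transpose_mat(1) zero_less_Suc)
  define T4 where "T4 = mat k k (\<lambda>(i,j). T $$ (Suc i, Suc j))"
  have T4: "T4 \<in> carrier_mat k k" unfolding T4_def by auto
  have T4sym: "transpose_mat T4 = T4" unfolding T4_def using Tsym T
    by (intro eq_matI, auto) (metis Suc_less_eq carrier_matD index_transpose_mat(1))
  from Suc.IH[OF T4 T4sym] obtain Q4 d4 where Q4o: "orth k Q4" and T4eq: "T4 = Q4 * dg k d4 * transpose_mat Q4" by auto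
  note Q4 = orthD[OF Q4o]
  define Q2 where "Q2 = four_block_mat (1\<^sub>m 1) (0\<^sub>m 1 k) (0\<^sub>m k 1) Q4"
  define D1 where "D1 = mat 1 1 (\<lambda>_. d0)"
  define d where "d = (\<lambda>i. if i = 0 then d0 else d4 (i - 1))"
  have Q2: "Q2 \<in> carrier_mat ?n ?n" unfolding Q2_def using Q4 by auto
  have Q2T: "transpose_mat Q2 = four_block_mat (1\<^sub>m 1) (0\<^sub>m 1 k) (0\<^sub>m k 1) (transpose_mat Q4)"
    unfolding Q2_def using Q4 by (subst transpose_four_block_mat) auto
  have "transpose_mat Q2 * Q2 = four_block_mat (1\<^sub>m 1 * 1\<^sub>m 1) (0\<^sub>m 1 k) (0\<^sub>m k 1) (transpose_mat Q4 * Q4)"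
    unfolding Q2T unfolding Q2_def by (rule bd_mult, insert Q4, auto)
  also have "\<dots> = 1\<^sub>m ?n" using Q4 by (intro eq_matI) auto
  finally have Q2o: "orth ?n Q2" unfolding orth_def using Q2 by auto
  have Deq: "dg ?n d = four_block_mat D1 (0\<^sub>m 1 k) (0\<^sub>m k 1) (dg k d4)"
    by (rule eq_matI, auto simp: d_def D1_def)
  have "Q2 * dg ?n d * transpose_mat Q2 = four_block_mat D1 (0\<^sub>m 1 k) (0\<^sub>m k 1) (Q4 * dg k d4 * transpose_mat Q4)"
  proof -
    have D1: "D1 \<in> carrier_mat 1 1" unfolding D1_def by auto
    have e1: "four_block_mat (1\<^sub>m 1) (0\<^sub>m 1 k) (0\<^sub>m k 1) Q4 * four_block_mat D1 (0\<^sub>m 1 k) (0\<^sub>m k 1) (dg k d4)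
      = four_block_mat (1\<^sub>m 1 * D1) (0\<^sub>m 1 k) (0\<^sub>m k 1) (Q4 * dg k d4)"
      by (rule bd_mult, insert Q4 D1, auto)
    have e2: "four_block_mat (1\<^sub>m 1 * D1) (0\<^sub>m 1 k) (0\<^sub>m k 1) (Q4 * dg k d4) * four_block_mat (1\<^sub>m 1) (0\<^sub>m 1 k) (0\<^sub>m k 1) (transpose_mat Q4)
      = four_block_mat (1\<^sub>m 1 * D1 * 1\<^sub>m 1) (0\<^sub>m 1 k) (0\<^sub>m k 1) (Q4 * dg k d4 * transpose_mat Q4)"
      by (rule bd_mult, insert Q4 D1, auto)
    show ?thesis unfolding Deq Q2T unfolding Q2_def e1 e2 using D1 by simp
  qed
  also have "\<dots> = T" unfolding T4eq[symmetric]
    by (rule eq_matI, insert T T0 T0', auto simp: T4_def D1_def)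
  finally have TQ2: "T = Q2 * dg ?n d * transpose_mat Q2" ..
  have "Q1 * T * transpose_mat Q1 = (Q1 * transpose_mat Q1) * S * (Q1 * transpose_mat Q1)"
    unfolding T_def using Q1(1) S by (simp add: assoc_mult_mat[of _ ?n ?n _ ?n _ ?n])
  hence "S = Q1 * T * transpose_mat Q1" using Q1 S by simp
  also have "\<dots> = (Q1 * Q2) * dg ?n d * transpose_mat (Q1 * Q2)" unfolding TQ2 using Q1 Q2
    using assoc5[of Q1 ?n Q2 "dg ?n d" "transpose_mat Q2" "transpose_mat Q1"] transpose_mult[of Q1 ?n ?n Q2 ?n] by simp
  finally show ?case using orth_mult[OF Q1o Q2o] by blast
qed


lemma sum_delta_right: "(j::nat) < n \<Longrightarrow> (\<Sum>k = 0..<n. f k * (if k = j then c else 0)) = f j * (c :: real)"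
proof -
  assume j: "j < n"
  have "(\<Sum>k = 0..<n. f k * (if k = j then c else 0)) = (\<Sum>k = 0..<n. if k = j then f k * c else 0)"
    by (rule sum.cong) auto
  also have "\<dots> = f j * c" by (subst sum.delta[OF finite_atLeastLessThan], use j in auto)
  finally show ?thesis .
qed

lemma sum_delta_left: "(j::nat) < n \<Longrightarrow> (\<Sum>k = 0..<n. (if k = j then c else 0) * f k) = (c :: real) * f j"
  using sum_delta_right[of j n f c] by (simp add: mult.commute)

lemma spectral_sorted:
  fixes S :: "real mat"
  assumes S: "S \<in> carrier_mat n n" and sym: "transpose_mat S = S"
  shows "\<exists>Q d. orth n Q \<and> S = Q * dg n d * transpose_mat Q \<and> (\<forall>i j. i \<le> j \<longrightarrow> j < n \<longrightarrow> d j \<le> d i)"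
proof -
  from spectral[OF S sym] obtain Q0 d0 where Q0o: "orth n Q0" and SQ: "S = Q0 * dg n d0 * transpose_mat Q0" by auto
  note Q0 = orthD[OF Q0o]
  define xs where "xs = sort_key (\<lambda>i. - d0 i) [0..<n]"
  have mxs: "mset xs = mset [0..<n]" unfolding xs_def by simp
  have len: "length xs = n" using mset_eq_length[OF mxs] by simp
  have dist: "distinct xs" using mset_eq_imp_distinct_iff[OF mxs] by simp
  have setxs: "set xs = {..<n}" using mset_eq_setD[OF mxs] by auto
  define \<pi> where "\<pi> = (\<lambda>j. xs ! j)"
  have bij: "bij_betw \<pi> {..<n} {..<n}" unfolding \<pi>_def using bij_betw_nth[OF dist _ refl] len setxs by simp
  have pin: "\<And>j. j < n \<Longrightarrow> \<pi> j < n" using bij by (meson bij_betwE lessThan_iff)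
  have piinj: "\<And>i j. i < n \<Longrightarrow> j < n \<Longrightarrow> \<pi> i = \<pi> j \<Longrightarrow> i = j" using bij
    by (metis bij_betw_iff_bijections lessThan_iff)
  have pisurj: "\<And>a. a < n \<Longrightarrow> \<exists>j<n. \<pi> j = a" using bij
    by (metis bij_betw_iff_bijections lessThan_iff)
  have sorted: "sorted (map (\<lambda>i. - d0 i) xs)" unfolding xs_def by (rule sorted_sort_key)
  define d where "d = (\<lambda>j. d0 (\<pi> j))"
  have dsort: "\<forall>i j. i \<le> j \<longrightarrow> j < n \<longrightarrow> d j \<le> d i"
  proof (intro allI impI)
    fix i j assume ij: "i \<le> j" "j < n"
    from sorted_nth_mono[OF sorted ij(1)] ij len have "- d0 (xs ! i) \<le> - d0 (xs ! j)" by simp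
    thus "d j \<le> d i" unfolding d_def \<pi>_def by simp
  qed
  define P where "P = mat n n (\<lambda>(k,j). if k = \<pi> j then 1 else (0::real))"
  have P: "P \<in> carrier_mat n n" unfolding P_def by auto
  have PtP: "transpose_mat P * P = 1\<^sub>m n"
  proof (rule eq_matI)
    fix i j assume "i < dim_row (1\<^sub>m n)" "j < dim_col (1\<^sub>m n)"
    hence i: "i < n" and j: "j < n" by auto
    have "(transpose_mat P * P) $$ (i,j) = (\<Sum>k = 0..<n. (if k = \<pi> i then 1 else 0) * (if k = \<pi> j then 1 else (0::real)))"
      using i j unfolding P_def by (auto simp: scalar_prod_def intro!: sum.cong)
    also have "\<dots> = (if \<pi> i = \<pi> j then 1 else 0)" by (subst sum_delta_left[OF pin[OF i]], simp)
    also have "\<dots> = 1\<^sub>m n $$ (i,j)" using i j piinj by auto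
    finally show "(transpose_mat P * P) $$ (i,j) = 1\<^sub>m n $$ (i,j)" .
  qed (use P in auto)
  have Po: "orth n P" unfolding orth_def using P PtP by auto
  note PP = orthD[OF Po]
  have PD: "P * dg n d = dg n d0 * P"
  proof (rule eq_matI)
    fix a j assume "a < dim_row (dg n d0 * P)" "j < dim_col (dg n d0 * P)"
    hence a: "a < n" and j: "j < n" using P by auto
    have "(P * dg n d) $$ (a,j) = (\<Sum>k = 0..<n. (if a = \<pi> k then 1 else 0) * (if k = j then d j else 0))"
      using a j unfolding P_def by (auto simp: scalar_prod_def intro!: sum.cong)
    also have "\<dots> = (if a = \<pi> j then 1 else 0) * d j" by (rule sum_delta_right[OF j])
    also have "\<dots> = d0 a * (if a = \<pi> j then 1 else 0)" unfolding d_def by auto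
    also have "\<dots> = (\<Sum>k = 0..<n. (if k = a then d0 a else 0) * (if k = \<pi> j then 1 else 0))"
      by (rule sum_delta_left[OF a, symmetric])
    also have "\<dots> = (dg n d0 * P) $$ (a,j)"
      using a j unfolding P_def by (auto simp: scalar_prod_def intro!: sum.cong)
    finally show "(P * dg n d) $$ (a,j) = (dg n d0 * P) $$ (a,j)" .
  qed (use P in auto)
  have "P * dg n d * transpose_mat P = dg n d0 * (P * transpose_mat P)"
    unfolding PD using P by (simp add: assoc_mult_mat[of _ n n _ n _ n])
  also have "\<dots> = dg n d0" using PP by simp
  finally have PDP: "P * dg n d * transpose_mat P = dg n d0" .
  have "S = Q0 * (P * dg n d * transpose_mat P) * transpose_mat Q0" unfolding PDP SQ ..
  also have "\<dots> = (Q0 * P) * dg n d * (transpose_mat P * transpose_mat Q0)"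
    by (rule assoc5, insert Q0 P, auto)
  also have "transpose_mat P * transpose_mat Q0 = transpose_mat (Q0 * P)"
    by (rule transpose_mult[symmetric], insert Q0 P, auto)
  finally show ?thesis using orth_mult[OF Q0o Po] dsort by blast
qed


lemma dg_mult_vec: "\<beta> \<in> carrier_vec n \<Longrightarrow> i < n \<Longrightarrow> (dg n d *\<^sub>v \<beta>) $ i = d i * \<beta> $ i"
proof -
  assume b: "\<beta> \<in> carrier_vec n" and i: "i < n"
  have "(dg n d *\<^sub>v \<beta>) $ i = (\<Sum>k = 0..<n. (if k = i then d i else 0) * \<beta> $ k)"
    using b i by (auto simp: scalar_prod_def intro!: sum.cong)
  also have "\<dots> = d i * \<beta> $ i" by (rule sum_delta_left[OF i])
  finally show ?thesis .
qed

lemma dg_mult_carrier[simp]: "dg n d *\<^sub>v \<beta> \<in> carrier_vec n"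
  by (rule carrier_vecI, simp)


lemma proots_linear_prod: "proots (\<Prod>a\<leftarrow>xs. [:- a, 1:]) = mset (xs :: real list)"
proof (induction xs)
  case (Cons a xs)
  have "0 \<notin> set (map (\<lambda>a. [:- a, 1:]) xs)" by auto
  hence nz: "(\<Prod>a\<leftarrow>xs. [:- a, 1:]) \<noteq> (0 :: real poly)"
    by (simp only: prod_list_zero_iff, simp)
  have "proots (\<Prod>a\<leftarrow>a # xs. [:- a, 1:]) = proots [:- a, 1:] + proots (\<Prod>a\<leftarrow>xs. [:- a, 1:])"
    unfolding list.map prod_list.Cons by (rule proots_mult, insert nz, auto)
  also have "\<dots> = {#a#} + mset xs" unfolding Cons.IH proots_linear_factor by simp
  finally show ?case by simp
qed (simp only: list.map prod_list.Nil proots_1 mset.simps)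

lemma svd:
  fixes M :: "real mat"
  assumes M: "M \<in> carrier_mat r c"
  shows "\<exists>Q d. orth c Q \<and> (\<forall>i<c. 0 \<le> d i) \<and> (\<forall>i j. i \<le> j \<longrightarrow> j < c \<longrightarrow> d j \<le> d i)
    \<and> singular_values M = image_mset (\<lambda>i. sqrt (d i)) (mset [0..<c])
    \<and> (\<forall>\<beta>\<in>carrier_vec c. (M *\<^sub>v (Q *\<^sub>v \<beta>)) \<bullet> (M *\<^sub>v (Q *\<^sub>v \<beta>)) = (\<Sum>i<c. d i * (\<beta> $ i)^2))"
proof -
  define S where "S = transpose_mat M * M"
  have S: "S \<in> carrier_mat c c" unfolding S_def using M by auto
  have sym: "transpose_mat S = S" unfolding S_def using M by (simp add: transpose_mult[of _ c r _ c])
  from spectral_sorted[OF S sym] obtain Q d where Qo: "orth c Q" and SQ: "S = Q * dg c d * transpose_mat Q"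
    and srt: "\<forall>i j. i \<le> j \<longrightarrow> j < c \<longrightarrow> d j \<le> d i" by auto
  note Q = orthD[OF Qo]
  have SQ2: "S * Q = Q * dg c d"
  proof -
    have "S * Q = Q * dg c d * (transpose_mat Q * Q)" unfolding SQ
      by (rule assoc_mult_mat, insert Q, auto)
    thus ?thesis using Q by simp
  qed
  have quad: "(M *\<^sub>v (Q *\<^sub>v \<beta>)) \<bullet> (M *\<^sub>v (Q *\<^sub>v \<beta>)) = (\<Sum>i<c. d i * (\<beta> $ i)^2)"
    if b: "\<beta> \<in> carrier_vec c" for \<beta>
  proof -
    define x where "x = Q *\<^sub>v \<beta>"
    have x: "x \<in> carrier_vec c" unfolding x_def using Q b by auto
    have Mx: "M *\<^sub>v x \<in> carrier_vec r" using M x by auto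
    have "(M *\<^sub>v x) \<bullet> (M *\<^sub>v x) = (transpose_mat M *\<^sub>v (M *\<^sub>v x)) \<bullet> x"
      by (rule transpose_vec_mult_scalar[symmetric, OF M x Mx])
    also have "transpose_mat M *\<^sub>v (M *\<^sub>v x) = S *\<^sub>v x" unfolding S_def using M x
      by (simp add: assoc_mult_mat_vec[of _ c r _ c])
    also have "S *\<^sub>v x = Q *\<^sub>v (dg c d *\<^sub>v \<beta>)" unfolding x_def using S Q b
      by (simp add: assoc_mult_mat_vec[of _ c c _ c, symmetric] SQ2)
    also have "(Q *\<^sub>v (dg c d *\<^sub>v \<beta>)) \<bullet> x = (transpose_mat Q *\<^sub>v (Q *\<^sub>v (dg c d *\<^sub>v \<beta>))) \<bullet> \<beta>"
      unfolding x_def by (rule transpose_vec_mult_scalar[symmetric], insert Q b, auto intro!: mult_mat_vec_carrier[of _ c c])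
    also have "transpose_mat Q *\<^sub>v (Q *\<^sub>v (dg c d *\<^sub>v \<beta>)) = (transpose_mat Q * Q) *\<^sub>v (dg c d *\<^sub>v \<beta>)"
      by (rule assoc_mult_mat_vec[symmetric], insert Q b, auto)
    also have "\<dots> = dg c d *\<^sub>v \<beta>" using Q b by simp
    also have "(dg c d *\<^sub>v \<beta>) \<bullet> \<beta> = (\<Sum>i = 0..<c. (dg c d *\<^sub>v \<beta>) $ i * \<beta> $ i)"
      by (simp only: scalar_prod_def carrier_vecD[OF b])
    also have "\<dots> = (\<Sum>i = 0..<c. d i * (\<beta> $ i)^2)"
    proof (rule sum.cong[OF refl])
      fix i assume "i \<in> {0..<c}"
      hence i: "i < c" by simp
      show "(dg c d *\<^sub>v \<beta>) $ i * \<beta> $ i = d i * (\<beta> $ i)^2"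
        unfolding dg_mult_vec[OF b i] by (simp add: power2_eq_square)
    qed
    also have "\<dots> = (\<Sum>i<c. d i * (\<beta> $ i)^2)" by (simp add: lessThan_atLeast0)
    finally show ?thesis unfolding x_def .
  qed
  have dnn: "0 \<le> d i" if i: "i < c" for i
  proof -
    have "(\<Sum>k<c. d k * (unit_vec c i $ k)^2) = (\<Sum>k<c. if k = i then d k else 0)"
      by (rule sum.cong, auto simp: unit_vec_def)
    also have "\<dots> = d i" using i by simp
    finally have "d i = (M *\<^sub>v (Q *\<^sub>v unit_vec c i)) \<bullet> (M *\<^sub>v (Q *\<^sub>v unit_vec c i))"
      using quad[of "unit_vec c i"] by simp
    thus ?thesis using vv_ge0 by simp
  qed
  have sim: "similar_mat S (dg c d)" unfolding similar_mat_def similar_mat_wit_def Let_def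
    by (rule exI[of _ Q], rule exI[of _ "transpose_mat Q"], insert S Q SQ, auto)
  have ut: "upper_triangular (dg c d)" unfolding upper_triangular_def by auto
  have diag: "diag_mat (dg c d) = map d [0..<c]" unfolding diag_mat_def by auto
  have cp: "char_poly S = (\<Prod>a\<leftarrow>map d [0..<c]. [:- a, 1:])"
    unfolding char_poly_similar[OF sim] char_poly_upper_triangular[OF dg_carrier ut] diag ..
  have "proots (char_poly S) = mset (map d [0..<c])"
    unfolding cp by (rule proots_linear_prod)
  hence sv: "singular_values M = image_mset (\<lambda>i. sqrt (d i)) (mset [0..<c])"
    unfolding singular_values_def S_def by (simp add: multiset.map_comp o_def)
  have dnn': "\<forall>i<c. 0 \<le> d i" using dnn by auto
  have quad': "\<forall>\<beta>\<in>carrier_vec c. (M *\<^sub>v (Q *\<^sub>v \<beta>)) \<bullet> (M *\<^sub>v (Q *\<^sub>v \<beta>)) = (\<Sum>i<c. d i * (\<beta> $ i)^2)"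
    using quad by auto
  show ?thesis by (rule exI[of _ Q], rule exI[of _ d], intro conjI, fact Qo, fact dnn', fact srt, fact sv, fact quad')
qed


definition svdat :: "real mat \<Rightarrow> nat \<Rightarrow> real mat \<Rightarrow> (nat \<Rightarrow> real) \<Rightarrow> bool" where
  "svdat M c Q d \<longleftrightarrow> orth c Q \<and> (\<forall>i<c. 0 \<le> d i) \<and> (\<forall>i j. i \<le> j \<longrightarrow> j < c \<longrightarrow> d j \<le> d i)
    \<and> singular_values M = image_mset (\<lambda>i. sqrt (d i)) (mset [0..<c])
    \<and> (\<forall>\<beta>\<in>carrier_vec c. (M *\<^sub>v (Q *\<^sub>v \<beta>)) \<bullet> (M *\<^sub>v (Q *\<^sub>v \<beta>)) = (\<Sum>i<c. d i * (\<beta> $ i)^2))"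

lemma svd': "M \<in> carrier_mat r c \<Longrightarrow> \<exists>Q d. svdat M c Q d"
  using svd[of M r c] unfolding svdat_def by blast

lemma orth_norm: assumes Q: "orth c Q" and a: "\<alpha> \<in> carrier_vec c"
  shows "(Q *\<^sub>v \<alpha>) \<bullet> (Q *\<^sub>v \<alpha>) = \<alpha> \<bullet> \<alpha>"
proof -
  note QQ = orthD[OF Q]
  have Qa: "Q *\<^sub>v \<alpha> \<in> carrier_vec c" using QQ a by auto
  have "(Q *\<^sub>v \<alpha>) \<bullet> (Q *\<^sub>v \<alpha>) = (transpose_mat Q *\<^sub>v (Q *\<^sub>v \<alpha>)) \<bullet> \<alpha>"
    by (rule transpose_vec_mult_scalar[symmetric, OF QQ(1) a Qa])
  also have "transpose_mat Q *\<^sub>v (Q *\<^sub>v \<alpha>) = (transpose_mat Q * Q) *\<^sub>v \<alpha>"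
    by (rule assoc_mult_mat_vec[symmetric], insert QQ a, auto)
  also have "\<dots> = \<alpha>" using QQ a by simp
  finally show ?thesis .
qed

lemma orthT: "orth c Q \<Longrightarrow> orth c (transpose_mat Q)"
  using orthD[of c Q] unfolding orth_def by auto

lemma orth_expand: assumes Q: "orth c Q" and x: "x \<in> carrier_vec c"
  shows "Q *\<^sub>v (transpose_mat Q *\<^sub>v x) = x"
proof -
  note QQ = orthD[OF Q]
  have "Q *\<^sub>v (transpose_mat Q *\<^sub>v x) = (Q * transpose_mat Q) *\<^sub>v x"
    by (rule assoc_mult_mat_vec[symmetric], insert QQ x, auto)
  also have "\<dots> = x" using QQ x by simp
  finally show ?thesis .
qed

lemma vv_sum: "(v :: real vec) \<in> carrier_vec c \<Longrightarrow> v \<bullet> v = (\<Sum>i<c. (v $ i)^2)"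
  by (rule vv_eq)

lemma svdat_sn: assumes "svdat M c Q d"
  shows "spectral_norm M = (if c = 0 then 0 else sqrt (d 0))"
proof -
  from assms have sv: "singular_values M = image_mset (\<lambda>i. sqrt (d i)) (mset [0..<c])"
    and dnn: "\<forall>i<c. 0 \<le> d i" and srt: "\<forall>i j. i \<le> j \<longrightarrow> j < c \<longrightarrow> d j \<le> d i"
    unfolding svdat_def by auto
  have set: "set_mset (singular_values M) = (\<lambda>i. sqrt (d i)) ` {0..<c}" unfolding sv by simp
  show ?thesis
  proof (cases "c = 0")
    case True thus ?thesis unfolding spectral_norm_def set by simp
  next
    case False
    have "Max (insert 0 ((\<lambda>i. sqrt (d i)) ` {0..<c})) = sqrt (d 0)"
    proof (rule Max_eqI)
      fix y assume "y \<in> insert 0 ((\<lambda>i. sqrt (d i)) ` {0..<c})"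
      thus "y \<le> sqrt (d 0)" using srt dnn False by auto
    next
      show "sqrt (d 0) \<in> insert 0 ((\<lambda>i. sqrt (d i)) ` {0..<c})" using False by auto
    qed auto
    thus ?thesis unfolding spectral_norm_def set using False by simp
  qed
qed

lemma svdat_sch: assumes "svdat M c Q d"
  shows "schatten_norm p M = (\<Sum>i<c. sqrt (d i) ^ p) powr (1 / real p)"
proof -
  from assms have sv: "singular_values M = image_mset (\<lambda>i. sqrt (d i)) (mset [0..<c])"
    unfolding svdat_def by auto
  have "sum_mset (image_mset (\<lambda>s. s ^ p) (singular_values M)) = (\<Sum>i<c. sqrt (d i) ^ p)"
    unfolding sv multiset.map_comp o_def
    by (simp add: sum_unfold_sum_mset lessThan_atLeast0)
  thus ?thesis unfolding schatten_norm_def by simp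
qed

lemma root_pow: assumes s: "(s::real) \<ge> 0" and p: "p \<ge> 1"
  shows "(s ^ p) powr (1 / real p) = s"
proof (cases "s = 0")
  case True thus ?thesis using p by simp
next
  case False
  hence s: "s > 0" using s by simp
  have "(s ^ p) powr (1 / real p) = (s powr real p) powr (1 / real p)" using s by (simp add: powr_realpow)
  also have "\<dots> = s" using p s by (simp add: powr_powr)
  finally show ?thesis .
qed

lemma sn_nonneg: "spectral_norm M \<ge> 0"
  unfolding spectral_norm_def
  by (rule Max_ge[THEN order_trans[rotated]], auto)

lemma sch_nonneg: "schatten_norm p M \<ge> 0"
  unfolding schatten_norm_def by simp

lemma sn_bound: assumes M: "M \<in> carrier_mat r c" and x: "x \<in> carrier_vec c"
  shows "(M *\<^sub>v x) \<bullet> (M *\<^sub>v x) \<le> (spectral_norm M)^2 * (x \<bullet> x)"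
proof -
  from svd'[OF M] obtain Q d where sd: "svdat M c Q d" by auto
  hence Qo: "orth c Q" and dnn: "\<forall>i<c. 0 \<le> d i" and srt: "\<forall>i j. i \<le> j \<longrightarrow> j < c \<longrightarrow> d j \<le> d i"
    and quad: "\<forall>\<beta>\<in>carrier_vec c. (M *\<^sub>v (Q *\<^sub>v \<beta>)) \<bullet> (M *\<^sub>v (Q *\<^sub>v \<beta>)) = (\<Sum>i<c. d i * (\<beta> $ i)^2)"
    unfolding svdat_def by auto
  note QQ = orthD[OF Qo]
  show ?thesis
  proof (cases "c = 0")
    case True
    hence "M *\<^sub>v x = 0\<^sub>v r" using M x by (intro eq_vecI) (auto simp: scalar_prod_def)
    thus ?thesis by (simp add: vv_ge0)
  next
    case False
    define \<beta> where "\<beta> = transpose_mat Q *\<^sub>v x"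
    have b: "\<beta> \<in> carrier_vec c" unfolding \<beta>_def using QQ x by auto
    have xe: "x = Q *\<^sub>v \<beta>" unfolding \<beta>_def using orth_expand[OF Qo x] ..
    have "(M *\<^sub>v x) \<bullet> (M *\<^sub>v x) = (\<Sum>i<c. d i * (\<beta> $ i)^2)" using quad b xe by auto
    also have "\<dots> \<le> (\<Sum>i<c. d 0 * (\<beta> $ i)^2)"
      by (rule sum_mono, rule mult_right_mono, insert srt, auto)
    also have "\<dots> = d 0 * (\<beta> \<bullet> \<beta>)" unfolding vv_sum[OF b] by (simp add: sum_distrib_left)
    also have "\<beta> \<bullet> \<beta> = x \<bullet> x" unfolding \<beta>_def by (rule orth_norm[OF orthT[OF Qo] x])
    also have "d 0 = (spectral_norm M)^2" unfolding svdat_sn[OF sd] using False dnn by simp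
    finally show ?thesis .
  qed
qed

lemma sn_le: assumes M: "M \<in> carrier_mat r c" and a: "a \<ge> 0"
  and bnd: "\<And>x. x \<in> carrier_vec c \<Longrightarrow> (M *\<^sub>v x) \<bullet> (M *\<^sub>v x) \<le> a^2 * (x \<bullet> x)"
  shows "spectral_norm M \<le> a"
proof -
  from svd'[OF M] obtain Q d where sd: "svdat M c Q d" by auto
  hence Qo: "orth c Q" and dnn: "\<forall>i<c. 0 \<le> d i"
    and quad: "\<forall>\<beta>\<in>carrier_vec c. (M *\<^sub>v (Q *\<^sub>v \<beta>)) \<bullet> (M *\<^sub>v (Q *\<^sub>v \<beta>)) = (\<Sum>i<c. d i * (\<beta> $ i)^2)"
    unfolding svdat_def by auto
  note QQ = orthD[OF Qo]
  show ?thesis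
  proof (cases "c = 0")
    case True thus ?thesis unfolding svdat_sn[OF sd] using a by simp
  next
    case False
    define e where "e = (unit_vec c 0 :: real vec)"
    have e: "e \<in> carrier_vec c" unfolding e_def by simp
    have "(\<Sum>i<c. d i * (e $ i)^2) = (\<Sum>i<c. if i = 0 then d i else 0)"
      by (rule sum.cong, auto simp: e_def unit_vec_def)
    also have "\<dots> = d 0" using False by simp
    finally have "(M *\<^sub>v (Q *\<^sub>v e)) \<bullet> (M *\<^sub>v (Q *\<^sub>v e)) = d 0" using quad e by auto
    moreover have "(Q *\<^sub>v e) \<bullet> (Q *\<^sub>v e) = 1"
    proof -
      have "(Q *\<^sub>v e) \<bullet> (Q *\<^sub>v e) = e \<bullet> e" by (rule orth_norm[OF Qo e])
      also have "e \<bullet> e = 1" unfolding e_def using False by simp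
      finally show ?thesis .
    qed
    moreover have "Q *\<^sub>v e \<in> carrier_vec c" using QQ e by auto
    ultimately have "d 0 \<le> a^2" using bnd[of "Q *\<^sub>v e"] by simp
    hence "sqrt (d 0) \<le> a" using a real_le_lsqrt by (simp add: real_sqrt_le_iff)
    thus ?thesis unfolding svdat_sn[OF sd] using False by simp
  qed
qed

lemma sn_attained: assumes M: "M \<in> carrier_mat r c" and c: "c > 0"
  shows "\<exists>x\<in>carrier_vec c. x \<bullet> x = 1 \<and> (M *\<^sub>v x) \<bullet> (M *\<^sub>v x) = (spectral_norm M)^2"
proof -
  from svd'[OF M] obtain Q d where sd: "svdat M c Q d" by auto
  hence Qo: "orth c Q" and dnn: "\<forall>i<c. 0 \<le> d i"
    and quad: "\<forall>\<beta>\<in>carrier_vec c. (M *\<^sub>v (Q *\<^sub>v \<beta>)) \<bullet> (M *\<^sub>v (Q *\<^sub>v \<beta>)) = (\<Sum>i<c. d i * (\<beta> $ i)^2)"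
    unfolding svdat_def by auto
  note QQ = orthD[OF Qo]
  define e where "e = (unit_vec c 0 :: real vec)"
  have e: "e \<in> carrier_vec c" unfolding e_def by simp
  have "(\<Sum>i<c. d i * (e $ i)^2) = (\<Sum>i<c. if i = 0 then d i else 0)"
    by (rule sum.cong, auto simp: e_def unit_vec_def)
  also have "\<dots> = d 0" using c by simp
  finally have "(M *\<^sub>v (Q *\<^sub>v e)) \<bullet> (M *\<^sub>v (Q *\<^sub>v e)) = d 0" using quad e by auto
  also have "d 0 = (spectral_norm M)^2" unfolding svdat_sn[OF sd] using c dnn by simp
  finally show ?thesis using orth_norm[OF Qo e] QQ e c unfolding e_def
    by (intro bexI[of _ "Q *\<^sub>v unit_vec c 0"]) auto
qed

lemma sn_le_sch: assumes M: "M \<in> carrier_mat r c" and p: "p \<ge> 1"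
  shows "spectral_norm M \<le> schatten_norm p M"
proof -
  from svd'[OF M] obtain Q d where sd: "svdat M c Q d" by auto
  hence dnn: "\<forall>i<c. 0 \<le> d i" unfolding svdat_def by auto
  show ?thesis
  proof (cases "c = 0")
    case True thus ?thesis unfolding svdat_sn[OF sd] by (simp add: sch_nonneg)
  next
    case False
    have "sqrt (d 0) ^ p \<le> (\<Sum>i<c. sqrt (d i) ^ p)"
      by (rule member_le_sum, insert False dnn, auto)
    hence "(sqrt (d 0) ^ p) powr (1 / real p) \<le> (\<Sum>i<c. sqrt (d i) ^ p) powr (1 / real p)"
      by (intro powr_mono2, insert p dnn False, auto)
    moreover have "(sqrt (d 0) ^ p) powr (1 / real p) = sqrt (d 0)"
      using p dnn False by (intro root_pow) auto
    ultimately show ?thesis unfolding svdat_sn[OF sd] svdat_sch[OF sd] using False by simp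
  qed
qed

lemma sch_le_sn: assumes M: "M \<in> carrier_mat r c" and p: "p \<ge> 1"
  shows "schatten_norm p M \<le> real c powr (1 / real p) * spectral_norm M"
proof -
  from svd'[OF M] obtain Q d where sd: "svdat M c Q d" by auto
  hence dnn: "\<forall>i<c. 0 \<le> d i" and srt: "\<forall>i j. i \<le> j \<longrightarrow> j < c \<longrightarrow> d j \<le> d i" unfolding svdat_def by auto
  show ?thesis
  proof (cases "c = 0")
    case True thus ?thesis unfolding svdat_sch[OF sd] by simp
  next
    case False
    have "(\<Sum>i<c. sqrt (d i) ^ p) \<le> (\<Sum>i<c. sqrt (d 0) ^ p)"
      by (rule sum_mono, rule power_mono, insert srt dnn, auto)
    also have "\<dots> = real c * sqrt (d 0) ^ p" by simp
    finally have "(\<Sum>i<c. sqrt (d i) ^ p) powr (1 / real p) \<le> (real c * sqrt (d 0) ^ p) powr (1 / real p)"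
      by (intro powr_mono2, insert p dnn, auto intro!: sum_nonneg)
    also have "\<dots> = real c powr (1 / real p) * (sqrt (d 0) ^ p) powr (1 / real p)"
      by (simp add: powr_mult)
    also have "(sqrt (d 0) ^ p) powr (1 / real p) = sqrt (d 0)"
      using p dnn False by (intro root_pow) auto
    finally show ?thesis unfolding svdat_sn[OF sd] svdat_sch[OF sd] using False by simp
  qed
qed


lemma mult_unit_vec_col: assumes A: "(A :: real mat) \<in> carrier_mat n m" and i: "i < m"
  shows "A *\<^sub>v unit_vec m i = col A i"
  by (rule eq_vecI, insert A i, auto)

lemma Mv_norm: assumes M: "(M :: real mat) \<in> carrier_mat r c" and v: "v \<in> carrier_vec c"
  shows "(M *\<^sub>v v) \<bullet> (M *\<^sub>v v) = (\<Sum>k<r. (row M k \<bullet> v)^2)"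
proof -
  have "M *\<^sub>v v \<in> carrier_vec r" using M v by auto
  from vv_sum[OF this] show ?thesis using M v by simp
qed

lemma sch2_frob: assumes M: "(M :: real mat) \<in> carrier_mat r c"
  shows "schatten_norm 2 M = sqrt (\<Sum>j<c. col M j \<bullet> col M j)"
proof -
  from svd'[OF M] obtain Q d where sd: "svdat M c Q d" by auto
  hence Qo: "orth c Q" and dnn: "\<forall>i<c. 0 \<le> d i"
    and quad: "\<forall>\<beta>\<in>carrier_vec c. (M *\<^sub>v (Q *\<^sub>v \<beta>)) \<bullet> (M *\<^sub>v (Q *\<^sub>v \<beta>)) = (\<Sum>i<c. d i * (\<beta> $ i)^2)"
    unfolding svdat_def by auto
  note QQ = orthD[OF Qo]
  have di: "d i = (M *\<^sub>v col Q i) \<bullet> (M *\<^sub>v col Q i)" if i: "i < c" for i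
  proof -
    define e where "e = (unit_vec c i :: real vec)"
    have e: "e \<in> carrier_vec c" unfolding e_def by simp
    have "(\<Sum>k<c. d k * (e $ k)^2) = (\<Sum>k<c. if k = i then d k else 0)"
      by (rule sum.cong, auto simp: e_def unit_vec_def)
    also have "\<dots> = d i" using i by simp
    finally have "(M *\<^sub>v (Q *\<^sub>v e)) \<bullet> (M *\<^sub>v (Q *\<^sub>v e)) = d i" using quad e by auto
    thus ?thesis unfolding e_def mult_unit_vec_col[OF QQ(1) i] by simp
  qed
  have rowsum: "(\<Sum>i<c. (y \<bullet> col Q i)^2) = y \<bullet> y" if y: "y \<in> carrier_vec c" for y
  proof -
    have "transpose_mat Q *\<^sub>v y \<in> carrier_vec c" using QQ y by auto
    from vv_sum[OF this] have "(transpose_mat Q *\<^sub>v y) \<bullet> (transpose_mat Q *\<^sub>v y) = (\<Sum>i<c. ((transpose_mat Q *\<^sub>v y) $ i)^2)" .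
    also have "\<dots> = (\<Sum>i<c. (y \<bullet> col Q i)^2)"
      by (rule sum.cong, insert QQ y, auto simp: comm_scalar_prod[of _ c])
    finally show ?thesis using orth_norm[OF orthT[OF Qo] y] by simp
  qed
  have "(\<Sum>i<c. d i) = (\<Sum>i<c. \<Sum>k<r. (row M k \<bullet> col Q i)^2)"
    by (rule sum.cong, insert QQ M, auto simp: di Mv_norm)
  also have "\<dots> = (\<Sum>k<r. \<Sum>i<c. (row M k \<bullet> col Q i)^2)" by (rule sum.swap)
  also have "\<dots> = (\<Sum>k<r. row M k \<bullet> row M k)"
    by (rule sum.cong, insert M, auto simp: rowsum)
  also have "\<dots> = (\<Sum>k<r. \<Sum>j<c. (M $$ (k,j))^2)"
    by (rule sum.cong, insert M, auto simp: vv_sum[OF carrier_vecI] carrier_matD)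
  also have "\<dots> = (\<Sum>j<c. \<Sum>k<r. (M $$ (k,j))^2)" by (rule sum.swap)
  also have "\<dots> = (\<Sum>j<c. col M j \<bullet> col M j)"
    by (rule sum.cong, insert M, auto simp: vv_sum[OF carrier_vecI] carrier_matD)
  finally have sumd: "(\<Sum>i<c. d i) = (\<Sum>j<c. col M j \<bullet> col M j)" .
  have "schatten_norm 2 M = (\<Sum>i<c. d i) powr (1 / 2)"
    unfolding svdat_sch[OF sd] by (rule arg_cong2[of _ _ _ _ "(powr)"], rule sum.cong, insert dnn, auto)
  also have "\<dots> = sqrt (\<Sum>i<c. d i)" by (rule powr_half_sqrt, insert dnn, auto intro: sum_nonneg)
  finally show ?thesis unfolding sumd .
qed


lemma weyl_k:
  fixes M N :: "real mat"
  assumes M: "M \<in> carrier_mat r c" and N: "N \<in> carrier_mat r' c"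
    and sM: "svdat M c Q \<mu>" and sN: "svdat N c V lm"
    and a: "a \<ge> 0"
    and bnd: "\<And>x. x \<in> carrier_vec c \<Longrightarrow> (M *\<^sub>v x) \<bullet> (M *\<^sub>v x) \<le> a^2 * ((N *\<^sub>v x) \<bullet> (N *\<^sub>v x))"
    and k: "k < c"
  shows "\<mu> k \<le> a^2 * lm k"
proof (rule ccontr)
  assume contra: "\<not> \<mu> k \<le> a^2 * lm k"
  from sM have Qo: "orth c Q" and msrt: "\<forall>i j. i \<le> j \<longrightarrow> j < c \<longrightarrow> \<mu> j \<le> \<mu> i"
    and mquad: "\<forall>\<beta>\<in>carrier_vec c. (M *\<^sub>v (Q *\<^sub>v \<beta>)) \<bullet> (M *\<^sub>v (Q *\<^sub>v \<beta>)) = (\<Sum>i<c. \<mu> i * (\<beta> $ i)^2)"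
    unfolding svdat_def by auto
  from sN have Vo: "orth c V" and lsrt: "\<forall>i j. i \<le> j \<longrightarrow> j < c \<longrightarrow> lm j \<le> lm i"
    and lnn: "\<forall>i<c. 0 \<le> lm i"
    and lquad: "\<forall>\<beta>\<in>carrier_vec c. (N *\<^sub>v (V *\<^sub>v \<beta>)) \<bullet> (N *\<^sub>v (V *\<^sub>v \<beta>)) = (\<Sum>i<c. lm i * (\<beta> $ i)^2)"
    unfolding svdat_def by auto
  note QQ = orthD[OF Qo] and VV = orthD[OF Vo]
  define rk where "rk = (\<lambda>j. vec (Suc k) (\<lambda>i. col V j \<bullet> col Q i))"
  define K where "K = mat\<^sub>r (Suc k) (Suc k) (\<lambda>j. if j = k then 0\<^sub>v (Suc k) else rk j)"
  have K: "K \<in> carrier_mat (Suc k) (Suc k)" unfolding K_def by auto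
  have "det K = 0" unfolding K_def by (rule det_row_0, auto simp: rk_def)
  with det_0_iff_vec_prod_zero_field[OF K] obtain \<alpha>' where a': "\<alpha>' \<in> carrier_vec (Suc k)"
    and a'0: "\<alpha>' \<noteq> 0\<^sub>v (Suc k)" and Ka: "K *\<^sub>v \<alpha>' = 0\<^sub>v (Suc k)" by auto
  define \<alpha> where "\<alpha> = vec c (\<lambda>i. if i \<le> k then \<alpha>' $ i else 0)"
  have al: "\<alpha> \<in> carrier_vec c" unfolding \<alpha>_def by auto
  have aa: "\<alpha> \<bullet> \<alpha> = \<alpha>' \<bullet> \<alpha>'"
  proof -
    have "\<alpha> \<bullet> \<alpha> = (\<Sum>i<c. (\<alpha> $ i)^2)" by (rule vv_sum[OF al])
    also have "\<dots> = (\<Sum>i<Suc k. (\<alpha> $ i)^2)"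
      by (rule sum.mono_neutral_right, insert k, auto simp: \<alpha>_def)
    also have "\<dots> = (\<Sum>i<Suc k. (\<alpha>' $ i)^2)"
      by (rule sum.cong, insert k, auto simp: \<alpha>_def)
    also have "\<dots> = \<alpha>' \<bullet> \<alpha>'" by (rule vv_sum[symmetric, OF a'])
    finally show ?thesis .
  qed
  have apos: "\<alpha> \<bullet> \<alpha> > 0" unfolding aa by (rule vv_pos[OF a' a'0])
  define x where "x = Q *\<^sub>v \<alpha>"
  have x: "x \<in> carrier_vec c" unfolding x_def using QQ al by auto
  have xx: "x \<bullet> x = \<alpha> \<bullet> \<alpha>" unfolding x_def by (rule orth_norm[OF Qo al])
  have "\<mu> k * (\<alpha> \<bullet> \<alpha>) = (\<Sum>i<c. \<mu> k * (\<alpha> $ i)^2)" unfolding vv_sum[OF al] by (simp add: sum_distrib_left)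
  also have "\<dots> \<le> (\<Sum>i<c. \<mu> i * (\<alpha> $ i)^2)"
  proof (rule sum_mono)
    fix i assume i: "i \<in> {..<c}"
    show "\<mu> k * (\<alpha> $ i)^2 \<le> \<mu> i * (\<alpha> $ i)^2"
    proof (cases "i \<le> k")
      case True thus ?thesis using msrt k by (intro mult_right_mono) auto
    next
      case False thus ?thesis using i by (simp add: \<alpha>_def)
    qed
  qed
  also have "\<dots> = (M *\<^sub>v x) \<bullet> (M *\<^sub>v x)" unfolding x_def using mquad al by auto
  finally have low: "\<mu> k * (\<alpha> \<bullet> \<alpha>) \<le> (M *\<^sub>v x) \<bullet> (M *\<^sub>v x)" .
  define \<gamma> where "\<gamma> = transpose_mat V *\<^sub>v x"
  have g: "\<gamma> \<in> carrier_vec c" unfolding \<gamma>_def using VV x by auto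
  have xg: "x = V *\<^sub>v \<gamma>" unfolding \<gamma>_def by (rule orth_expand[symmetric, OF Vo x])
  have gg: "\<gamma> \<bullet> \<gamma> = x \<bullet> x" unfolding \<gamma>_def by (rule orth_norm[OF orthT[OF Vo] x])
  have g0: "\<gamma> $ j = 0" if j: "j < k" for j
  proof -
    have jc: "j < c" using j k by simp
    have cV: "col V j \<in> carrier_vec c" using VV jc by auto
    have "\<gamma> $ j = col V j \<bullet> x" unfolding \<gamma>_def using VV x jc by simp
    also have "\<dots> = (transpose_mat Q *\<^sub>v col V j) \<bullet> \<alpha>" unfolding x_def
      by (rule transpose_vec_mult_scalar[symmetric, OF QQ(1) al cV])
    also have "\<dots> = (\<Sum>i<c. (transpose_mat Q *\<^sub>v col V j) $ i * \<alpha> $ i)"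
      using al QQ by (simp add: scalar_prod_def lessThan_atLeast0)
    also have "\<dots> = (\<Sum>i<Suc k. (col V j \<bullet> col Q i) * \<alpha>' $ i)"
    proof -
      have "(\<Sum>i<c. (transpose_mat Q *\<^sub>v col V j) $ i * \<alpha> $ i) = (\<Sum>i<Suc k. (transpose_mat Q *\<^sub>v col V j) $ i * \<alpha> $ i)"
        by (rule sum.mono_neutral_right, insert k, auto simp: \<alpha>_def)
      also have "\<dots> = (\<Sum>i<Suc k. (col V j \<bullet> col Q i) * \<alpha>' $ i)"
        by (rule sum.cong, insert k QQ cV, auto simp: \<alpha>_def comm_scalar_prod[of _ c])
      finally show ?thesis .
    qed
    also have "\<dots> = (K *\<^sub>v \<alpha>') $ j"
      using j a' unfolding K_def rk_def by (auto simp: scalar_prod_def lessThan_atLeast0)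
    also have "\<dots> = 0" unfolding Ka using j by simp
    finally show ?thesis .
  qed
  have "(N *\<^sub>v x) \<bullet> (N *\<^sub>v x) = (\<Sum>j<c. lm j * (\<gamma> $ j)^2)" unfolding xg using lquad g by auto
  also have "\<dots> \<le> (\<Sum>j<c. lm k * (\<gamma> $ j)^2)"
  proof (rule sum_mono)
    fix j assume j: "j \<in> {..<c}"
    show "lm j * (\<gamma> $ j)^2 \<le> lm k * (\<gamma> $ j)^2"
    proof (cases "j < k")
      case True thus ?thesis using g0 by simp
    next
      case False thus ?thesis using lsrt j by (intro mult_right_mono) auto
    qed
  qed
  also have "\<dots> = lm k * (\<gamma> \<bullet> \<gamma>)" unfolding vv_sum[OF g] by (simp add: sum_distrib_left)
  also have "\<gamma> \<bullet> \<gamma> = \<alpha> \<bullet> \<alpha>" unfolding gg xx ..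
  finally have up: "(N *\<^sub>v x) \<bullet> (N *\<^sub>v x) \<le> lm k * (\<alpha> \<bullet> \<alpha>)" .
  have "\<mu> k * (\<alpha> \<bullet> \<alpha>) \<le> a^2 * (lm k * (\<alpha> \<bullet> \<alpha>))"
    using low bnd[OF x] up mult_left_mono[OF up, of "a^2"] by simp
  hence "\<mu> k \<le> a^2 * lm k" using apos by (simp add: mult.assoc[symmetric])
  with contra show False by simp
qed

lemma weyl:
  fixes M N :: "real mat"
  assumes M: "M \<in> carrier_mat r c" and N: "N \<in> carrier_mat r' c"
    and a: "a \<ge> 0" and p: "p \<ge> 1"
    and bnd: "\<And>x. x \<in> carrier_vec c \<Longrightarrow> (M *\<^sub>v x) \<bullet> (M *\<^sub>v x) \<le> a^2 * ((N *\<^sub>v x) \<bullet> (N *\<^sub>v x))"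
  shows "schatten_norm p M \<le> a * schatten_norm p N"
proof -
  from svd'[OF M] obtain Q \<mu> where sM: "svdat M c Q \<mu>" by auto
  from svd'[OF N] obtain V lm where sN: "svdat N c V lm" by auto
  have mnn: "\<forall>i<c. 0 \<le> \<mu> i" and lnn: "\<forall>i<c. 0 \<le> lm i" using sM sN unfolding svdat_def by auto
  have "(\<Sum>i<c. sqrt (\<mu> i) ^ p) \<le> (\<Sum>i<c. (a * sqrt (lm i)) ^ p)"
  proof (rule sum_mono)
    fix i assume i: "i \<in> {..<c}"
    have "\<mu> i \<le> a^2 * lm i" by (rule weyl_k[OF M N sM sN a bnd], insert i, auto)
    hence "sqrt (\<mu> i) \<le> sqrt (a^2 * lm i)" by simp
    also have "\<dots> = a * sqrt (lm i)" using a by (simp add: real_sqrt_mult)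
    finally show "sqrt (\<mu> i) ^ p \<le> (a * sqrt (lm i)) ^ p" using mnn i by (intro power_mono) auto
  qed
  also have "\<dots> = a ^ p * (\<Sum>i<c. sqrt (lm i) ^ p)" by (simp add: power_mult_distrib sum_distrib_left)
  finally have "(\<Sum>i<c. sqrt (\<mu> i) ^ p) powr (1 / real p) \<le> (a ^ p * (\<Sum>i<c. sqrt (lm i) ^ p)) powr (1 / real p)"
    by (intro powr_mono2, insert p mnn, auto intro!: sum_nonneg)
  also have "\<dots> = (a ^ p) powr (1 / real p) * (\<Sum>i<c. sqrt (lm i) ^ p) powr (1 / real p)"
    using a lnn by (simp add: powr_mult sum_nonneg)
  also have "(a ^ p) powr (1 / real p) = a" by (rule root_pow[OF a p])
  finally show ?thesis unfolding svdat_sch[OF sM] svdat_sch[OF sN] .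
qed


lemma bs_mono: assumes bs: "block_structure n m nb" and ab: "a \<le> b" and bm: "b \<le> m"
  shows "nb a \<le> nb b"
  using ab bm
proof (induction b)
  case 0 thus ?case by simp
next
  case (Suc b)
  show ?case
  proof (cases "a = Suc b")
    case False
    hence "nb a \<le> nb b" using Suc by simp
    also have "nb b < nb (Suc b)" using bs Suc.prems unfolding block_structure_def by auto
    finally show ?thesis by simp
  qed simp
qed

lemma bs_le_n: "block_structure n m nb \<Longrightarrow> j \<le> m \<Longrightarrow> nb j \<le> n"
  using bs_mono[of n m nb j m] unfolding block_structure_def by auto

lemma bs_exists_gen: "(\<forall>j<m. (nb :: nat \<Rightarrow> nat) j < nb (Suc j)) \<Longrightarrow> nb 0 \<le> i \<Longrightarrow> i < nb m \<Longrightarrow> \<exists>j<m. nb j \<le> i \<and> i < nb (Suc j)"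
proof (induction m)
  case 0 thus ?case by simp
next
  case (Suc m)
  show ?case
  proof (cases "i < nb m")
    case True
    with Suc have "\<exists>j<m. nb j \<le> i \<and> i < nb (Suc j)" by auto
    thus ?thesis by (meson less_SucI)
  next
    case False thus ?thesis using Suc.prems by (intro exI[of _ m]) auto
  qed
qed

lemma bs_exists: "block_structure n m nb \<Longrightarrow> i < n \<Longrightarrow> \<exists>j<m. nb j \<le> i \<and> i < nb (Suc j)"
  using bs_exists_gen[of m nb i] unfolding block_structure_def by auto

lemma bs_unique: assumes bs: "block_structure n m nb" and j1: "j1 < m" and j2: "j2 < m"
  and i1: "nb j1 \<le> i" "i < nb (Suc j1)" and i2: "nb j2 \<le> i" "i < nb (Suc j2)"
  shows "j1 = j2"
proof (rule ccontr)
  assume "j1 \<noteq> j2"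
  hence "j1 < j2 \<or> j2 < j1" by auto
  thus False
  proof
    assume "j1 < j2"
    hence "nb (Suc j1) \<le> nb j2" using bs_mono[OF bs, of "Suc j1" j2] j2 by auto
    thus False using i1 i2 by simp
  next
    assume "j2 < j1"
    hence "nb (Suc j2) \<le> nb j1" using bs_mono[OF bs, of "Suc j2" j1] j1 by auto
    thus False using i1 i2 by simp
  qed
qed

lemma bs_sum_gen: assumes bs: "block_structure n m nb" and k: "k \<le> m"
  shows "(\<Sum>j<k. \<Sum>i\<in>{nb j..<nb (Suc j)}. f i) = (\<Sum>i\<in>{0..<nb k}. f i)"
  using k
proof (induction k)
  case 0 thus ?case using bs unfolding block_structure_def by simp
next
  case (Suc k)
  have "(\<Sum>j<Suc k. \<Sum>i\<in>{nb j..<nb (Suc j)}. f i) = (\<Sum>i\<in>{0..<nb k}. f i) + (\<Sum>i\<in>{nb k..<nb (Suc k)}. f i)"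
    using Suc by simp
  also have "\<dots> = (\<Sum>i\<in>{0..<nb (Suc k)}. f i)"
    by (rule sum.atLeastLessThan_concat, simp, rule bs_mono[OF bs], insert Suc.prems, auto)
  finally show ?case .
qed

lemma bs_sum: "block_structure n m nb \<Longrightarrow> (\<Sum>j<m. \<Sum>i\<in>{nb j..<nb (Suc j)}. f i) = (\<Sum>i<n. f i)"
  using bs_sum_gen[of n m nb m f] unfolding block_structure_def by (simp add: lessThan_atLeast0)

lemma block_pick: assumes bs: "block_structure n m nb" and j0: "j0 < m" and i: "nb j0 \<le> i" "i < nb (Suc j0)"
  shows "(\<Sum>j<m. (if nb j \<le> i \<and> i < nb (Suc j) then g j else 0) * h j) = g j0 * (h j0 :: real)"
proof -
  have "(\<Sum>j<m. (if nb j \<le> i \<and> i < nb (Suc j) then g j else 0) * h j) = (\<Sum>j<m. if j = j0 then g j0 * h j0 else 0)"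
  proof (rule sum.cong[OF refl])
    fix j assume j: "j \<in> {..<m}"
    show "(if nb j \<le> i \<and> i < nb (Suc j) then g j else 0) * h j = (if j = j0 then g j0 * h j0 else 0)"
    proof (cases "j = j0")
      case True thus ?thesis using i by simp
    next
      case False
      hence nin: "\<not> (nb j \<le> i \<and> i < nb (Suc j))" using bs_unique[OF bs _ j0 _ _ i(1) i(2), of j] j by auto
      show ?thesis by (subst if_not_P[OF nin], simp add: False)
    qed
  qed
  also have "\<dots> = g j0 * h j0" using j0 by simp
  finally show ?thesis .
qed


lemma exists_X:
  assumes bs: "block_structure n m nb" and v: "(v :: real vec) \<in> carrier_vec n"
  shows "\<exists>X c. X \<in> Db n m nb \<and> spectral_norm X \<le> 1 \<and> c \<in> carrier_vec m \<and> c \<bullet> c = v \<bullet> v \<and> X *\<^sub>v c = v"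
proof -
  define w where "w = (\<lambda>j. sqrt (\<Sum>i\<in>{nb j..<nb (Suc j)}. (v $ i)^2))"
  define X where "X = mat n m (\<lambda>(i,j). if nb j \<le> i \<and> i < nb (Suc j) then v $ i / w j else 0)"
  define c where "c = vec m w"
  have X: "X \<in> carrier_mat n m" unfolding X_def by auto
  have c: "c \<in> carrier_vec m" unfolding c_def by auto
  have w2: "(w j)^2 = (\<Sum>i\<in>{nb j..<nb (Suc j)}. (v $ i)^2)" for j
    unfolding w_def by (rule real_sqrt_pow2, rule sum_nonneg, auto)
  have XDb: "X \<in> Db n m nb" unfolding Db_def using X by (auto simp: X_def)
  have blk: "\<exists>j<m. nb j \<le> i \<and> i < nb (Suc j)" if "i < n" for i using bs_exists[OF bs that] .
  have Xy: "(X *\<^sub>v y) $ i = v $ i / w j * y $ j"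
    if y: "y \<in> carrier_vec m" and i: "i < n" and j: "j < m" "nb j \<le> i" "i < nb (Suc j)" for y i j
  proof -
    have "(X *\<^sub>v y) $ i = (\<Sum>j'<m. (if nb j' \<le> i \<and> i < nb (Suc j') then v $ i / w j' else 0) * y $ j')"
      using i y unfolding X_def by (auto simp: scalar_prod_def lessThan_atLeast0 intro!: sum.cong)
    also have "\<dots> = v $ i / w j * y $ j" by (rule block_pick[OF bs j])
    finally show ?thesis .
  qed
  have cc: "c \<bullet> c = v \<bullet> v"
  proof -
    have "c \<bullet> c = (\<Sum>j<m. (w j)^2)" unfolding vv_sum[OF c] by (simp add: c_def)
    also have "\<dots> = (\<Sum>j<m. \<Sum>i\<in>{nb j..<nb (Suc j)}. (v $ i)^2)" unfolding w2 ..
    also have "\<dots> = (\<Sum>i<n. (v $ i)^2)" by (rule bs_sum[OF bs])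
    also have "\<dots> = v \<bullet> v" by (rule vv_sum[symmetric, OF v])
    finally show ?thesis .
  qed
  have Xc: "X *\<^sub>v c = v"
  proof (rule eq_vecI)
    fix i assume "i < dim_vec v"
    hence i: "i < n" using v by simp
    from blk[OF i] obtain j where j: "j < m" "nb j \<le> i" "i < nb (Suc j)" by auto
    have "(X *\<^sub>v c) $ i = v $ i / w j * w j" unfolding Xy[OF c i j] using j by (simp add: c_def)
    also have "\<dots> = v $ i"
    proof (cases "w j = 0")
      case False thus ?thesis by simp
    next
      case True
      hence "(\<Sum>i\<in>{nb j..<nb (Suc j)}. (v $ i)^2) = 0" using w2[of j] by simp
      hence "(v $ i)^2 = 0" using j by (subst (asm) sum_nonneg_eq_0_iff) auto
      thus ?thesis by simp
    qed
    finally show "(X *\<^sub>v c) $ i = v $ i" .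
  qed (use X v in auto)
  have snX: "spectral_norm X \<le> 1"
  proof (rule sn_le[OF X])
    fix y :: "real vec" assume y: "y \<in> carrier_vec m"
    have Xyc: "X *\<^sub>v y \<in> carrier_vec n" using X y by auto
    have "(X *\<^sub>v y) \<bullet> (X *\<^sub>v y) = (\<Sum>i<n. ((X *\<^sub>v y) $ i)^2)" by (rule vv_sum[OF Xyc])
    also have "\<dots> = (\<Sum>j<m. \<Sum>i\<in>{nb j..<nb (Suc j)}. ((X *\<^sub>v y) $ i)^2)" by (rule bs_sum[OF bs, symmetric])
    also have "\<dots> = (\<Sum>j<m. \<Sum>i\<in>{nb j..<nb (Suc j)}. (y $ j / w j)^2 * (v $ i)^2)"
    proof (rule sum.cong[OF refl], rule sum.cong[OF refl])
      fix j i assume j: "j \<in> {..<m}" and i: "i \<in> {nb j..<nb (Suc j)}"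
      have "i < n" using i bs_le_n[OF bs, of "Suc j"] j by auto
      thus "((X *\<^sub>v y) $ i)^2 = (y $ j / w j)^2 * (v $ i)^2" using Xy[OF y _ _ ] i j
        by (simp add: power_mult_distrib power_divide)
    qed
    also have "\<dots> = (\<Sum>j<m. (y $ j / w j)^2 * (w j)^2)" unfolding w2 by (simp add: sum_distrib_left)
    also have "\<dots> \<le> (\<Sum>j<m. (y $ j)^2)"
    proof (rule sum_mono)
      fix j show "(y $ j / w j)^2 * (w j)^2 \<le> (y $ j)^2"
        by (cases "w j = 0", auto simp: power_divide)
    qed
    also have "\<dots> = 1^2 * (y \<bullet> y)" unfolding vv_sum[OF y] by simp
    finally show "(X *\<^sub>v y) \<bullet> (X *\<^sub>v y) \<le> 1^2 * (y \<bullet> y)" .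
  qed simp
  show ?thesis using XDb snX c cc Xc by blast
qed


lemma sn_mult: assumes A: "(A :: real mat) \<in> carrier_mat n k" and X: "X \<in> carrier_mat k m"
  shows "spectral_norm (A * X) \<le> spectral_norm A * spectral_norm X"
proof (rule sn_le)
  show "A * X \<in> carrier_mat n m" using A X by auto
  show "0 \<le> spectral_norm A * spectral_norm X" using sn_nonneg by simp
  fix v :: "real vec" assume v: "v \<in> carrier_vec m"
  have Xv: "X *\<^sub>v v \<in> carrier_vec k" using X v by auto
  have "(A * X *\<^sub>v v) \<bullet> (A * X *\<^sub>v v) = (A *\<^sub>v (X *\<^sub>v v)) \<bullet> (A *\<^sub>v (X *\<^sub>v v))"
    using A X v by (simp add: assoc_mult_mat_vec[of _ n k _ m])
  also have "\<dots> \<le> (spectral_norm A)^2 * ((X *\<^sub>v v) \<bullet> (X *\<^sub>v v))" by (rule sn_bound[OF A Xv])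
  also have "\<dots> \<le> (spectral_norm A)^2 * ((spectral_norm X)^2 * (v \<bullet> v))"
    by (rule mult_left_mono[OF sn_bound[OF X v]], simp)
  finally show "(A * X *\<^sub>v v) \<bullet> (A * X *\<^sub>v v) \<le> (spectral_norm A * spectral_norm X)^2 * (v \<bullet> v)"
    by (simp add: power_mult_distrib mult.assoc)
qed

lemma Db_carrier: "X \<in> Db n m nb \<Longrightarrow> X \<in> carrier_mat n m" unfolding Db_def by auto

lemma zero_Db: "0\<^sub>m n m \<in> Db n m nb" unfolding Db_def by auto

lemma sn_zero: "spectral_norm (0\<^sub>m n m) \<le> 1"
proof -
  have "spectral_norm (0\<^sub>m n m) \<le> 0"
  proof (rule sn_le[of _ n m])
    fix x :: "real vec" assume x: "x \<in> carrier_vec m"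
    have "0\<^sub>m n m *\<^sub>v x = 0\<^sub>v n" using x by (intro eq_vecI) (auto simp: scalar_prod_def)
    thus "(0\<^sub>m n m *\<^sub>v x) \<bullet> (0\<^sub>m n m *\<^sub>v x) \<le> 0^2 * (x \<bullet> x)" by simp
  qed auto
  thus ?thesis by simp
qed

lemma sch_AX_bound:
  assumes A: "A \<in> carrier_mat n n" and X: "X \<in> Db n m nb" and sX: "spectral_norm X \<le> 1" and p: "p \<ge> 1"
  shows "schatten_norm p (A * X) \<le> real m powr (1 / real p) * spectral_norm A"
proof -
  have Xc: "X \<in> carrier_mat n m" by (rule Db_carrier[OF X])
  have AX: "A * X \<in> carrier_mat n m" using A Xc by auto
  have "spectral_norm (A * X) \<le> spectral_norm A * spectral_norm X" by (rule sn_mult[OF A Xc])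
  also have "\<dots> \<le> spectral_norm A" using sX sn_nonneg[of A] by (simp add: mult_left_le)
  finally have s: "spectral_norm (A * X) \<le> spectral_norm A" .
  have "schatten_norm p (A * X) \<le> real m powr (1 / real p) * spectral_norm (A * X)" by (rule sch_le_sn[OF AX p])
  also have "\<dots> \<le> real m powr (1 / real p) * spectral_norm A" by (rule mult_left_mono[OF s], simp)
  finally show ?thesis .
qed

lemma bn_bdd:
  assumes A: "A \<in> carrier_mat n n" and p: "p \<ge> 1"
  shows "bdd_above {schatten_norm p (A * X) | X. X \<in> Db n m nb \<and> spectral_norm X \<le> 1}"
  using sch_AX_bound[OF A _ _ p] unfolding bdd_above_def by blast

lemma bn_ne: "{f X | X. X \<in> Db n m nb \<and> spectral_norm X \<le> 1} \<noteq> {}"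
  using zero_Db sn_zero by blast

lemma bn_upper:
  assumes A: "A \<in> carrier_mat n n" and p: "p \<ge> 1" and X: "X \<in> Db n m nb" and sX: "spectral_norm X \<le> 1"
  shows "schatten_norm p (A * X) \<le> block_norm n m nb p A"
  unfolding block_norm_def by (rule cSup_upper[OF _ bn_bdd[OF A p]], insert X sX, blast)

lemma bn_least:
  assumes "\<And>X. X \<in> Db n m nb \<Longrightarrow> spectral_norm X \<le> 1 \<Longrightarrow> schatten_norm p (A * X) \<le> z"
  shows "block_norm n m nb p A \<le> z"
  unfolding block_norm_def by (rule cSup_least[OF bn_ne], insert assms, blast)

lemma part_i:
  assumes A: "A \<in> carrier_mat n n" and B: "B \<in> carrier_mat n n" and p: "p \<ge> 1"
  shows "block_norm n m nb p (A * B) \<le> spectral_norm A * block_norm n m nb p B"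
proof (rule bn_least)
  fix X assume X: "X \<in> Db n m nb" and sX: "spectral_norm X \<le> 1"
  have Xc: "X \<in> carrier_mat n m" by (rule Db_carrier[OF X])
  have BX: "B * X \<in> carrier_mat n m" using B Xc by auto
  have "schatten_norm p (A * (B * X)) \<le> spectral_norm A * schatten_norm p (B * X)"
  proof (rule weyl[of _ n m _ n])
    show "A * (B * X) \<in> carrier_mat n m" using A BX by auto
    fix x :: "real vec" assume x: "x \<in> carrier_vec m"
    have BXx: "B * X *\<^sub>v x \<in> carrier_vec n" using BX x by auto
    have "(A * (B * X) *\<^sub>v x) = A *\<^sub>v (B * X *\<^sub>v x)" using A BX x by (simp add: assoc_mult_mat_vec[of _ n n _ m])
    thus "(A * (B * X) *\<^sub>v x) \<bullet> (A * (B * X) *\<^sub>v x) \<le> (spectral_norm A)^2 * ((B * X *\<^sub>v x) \<bullet> (B * X *\<^sub>v x))"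
      using sn_bound[OF A BXx] by simp
  qed (use BX sn_nonneg p in auto)
  also have "\<dots> \<le> spectral_norm A * block_norm n m nb p B"
    by (rule mult_left_mono[OF bn_upper[OF B p X sX] sn_nonneg])
  finally show "schatten_norm p (A * B * X) \<le> spectral_norm A * block_norm n m nb p B"
    using A B Xc by (simp add: assoc_mult_mat[of _ n n _ n _ m])
qed


lemma bs_n_pos: "block_structure n m nb \<Longrightarrow> 0 < m \<Longrightarrow> 0 < n"
  using bs_mono[of n m nb 1 m] unfolding block_structure_def by fastforce

lemma exists_X_A:
  assumes bs: "block_structure n m nb" and m: "0 < m" and A: "A \<in> carrier_mat n n"
  shows "\<exists>X. X \<in> Db n m nb \<and> spectral_norm X \<le> 1 \<and> spectral_norm A \<le> spectral_norm (A * X)"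
proof -
  have n: "0 < n" by (rule bs_n_pos[OF bs m])
  from sn_attained[OF A n] obtain v where v: "v \<in> carrier_vec n" and vv: "v \<bullet> v = 1"
    and Av: "(A *\<^sub>v v) \<bullet> (A *\<^sub>v v) = (spectral_norm A)^2" by auto
  from exists_X[OF bs v] obtain X c where X: "X \<in> Db n m nb" and sX: "spectral_norm X \<le> 1"
    and c: "c \<in> carrier_vec m" and cc: "c \<bullet> c = v \<bullet> v" and Xc: "X *\<^sub>v c = v" by auto
  have Xm: "X \<in> carrier_mat n m" by (rule Db_carrier[OF X])
  have AX: "A * X \<in> carrier_mat n m" using A Xm by auto
  have "A * X *\<^sub>v c = A *\<^sub>v v" using A Xm c Xc by (simp add: assoc_mult_mat_vec[of _ n n _ m])
  hence "(spectral_norm A)^2 \<le> (spectral_norm (A * X))^2 * (c \<bullet> c)"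
    using sn_bound[OF AX c] Av by simp
  hence "(spectral_norm A)^2 \<le> (spectral_norm (A * X))^2" using cc vv by simp
  hence "spectral_norm A \<le> spectral_norm (A * X)" using sn_nonneg[of "A * X"] by (rule power2_le_imp_le)
  thus ?thesis using X sX by blast
qed

lemma part_ii_a:
  assumes bs: "block_structure n m nb" and m: "0 < m" and A: "A \<in> carrier_mat n n" and p: "p \<ge> 1"
  shows "spectral_norm A \<le> block_norm n m nb p A"
proof -
  from exists_X_A[OF bs m A] obtain X where X: "X \<in> Db n m nb" and sX: "spectral_norm X \<le> 1"
    and le: "spectral_norm A \<le> spectral_norm (A * X)" by auto
  have AX: "A * X \<in> carrier_mat n m" using A Db_carrier[OF X] by auto
  note le
  also have "spectral_norm (A * X) \<le> schatten_norm p (A * X)" by (rule sn_le_sch[OF AX p])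
  also have "\<dots> \<le> block_norm n m nb p A" by (rule bn_upper[OF A p X sX])
  finally show ?thesis .
qed

lemma part_ii_b:
  assumes bs: "block_structure n m nb" and m: "0 < m" and A: "A \<in> carrier_mat n n"
  shows "block_norm_inf n m nb A = spectral_norm A"
proof -
  let ?S = "{spectral_norm (A * X) | X. X \<in> Db n m nb \<and> spectral_norm X \<le> 1}"
  have ub: "spectral_norm (A * X) \<le> spectral_norm A" if X: "X \<in> Db n m nb" and sX: "spectral_norm X \<le> 1" for X
  proof -
    have "spectral_norm (A * X) \<le> spectral_norm A * spectral_norm X" by (rule sn_mult[OF A Db_carrier[OF X]])
    also have "\<dots> \<le> spectral_norm A" using sX sn_nonneg[of A] by (simp add: mult_left_le)
    finally show ?thesis .
  qed
  have le1: "Sup ?S \<le> spectral_norm A" by (rule cSup_least[OF bn_ne], insert ub, blast)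
  have bdd: "bdd_above ?S" unfolding bdd_above_def using ub by blast
  from exists_X_A[OF bs m A] obtain X where X: "X \<in> Db n m nb" and sX: "spectral_norm X \<le> 1"
    and le: "spectral_norm A \<le> spectral_norm (A * X)" by auto
  have "spectral_norm (A * X) \<le> Sup ?S" by (rule cSup_upper[OF _ bdd], insert X sX, blast)
  with le le1 show ?thesis unfolding block_norm_inf_def by linarith
qed

lemma part_iii:
  assumes A: "A \<in> carrier_mat n n" and p: "p \<ge> 1"
  shows "block_norm n m nb p A \<le> real m powr (1 / real p) * spectral_norm A"
  by (rule bn_least, rule sch_AX_bound[OF A _ _ p])


lemma col_sum_block:
  assumes bs: "block_structure n m nb" and X: "X \<in> Db n m nb" and j: "j < m"
    and M: "(M :: real mat) \<in> carrier_mat r n" and i: "i < r"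
  shows "(M * X) $$ (i,j) = (\<Sum>c = 0..<nb (Suc j) - nb j. M $$ (i, nb j + c) * X $$ (nb j + c, j))"
proof -
  have Xc: "X \<in> carrier_mat n m" by (rule Db_carrier[OF X])
  have Xz: "X $$ (k,j) = 0" if "k < n" "\<not> (nb j \<le> k \<and> k < nb (Suc j))" for k
    using X that j unfolding Db_def by auto
  have bn: "nb (Suc j) \<le> n" using bs_le_n[OF bs, of "Suc j"] j by simp
  have "(M * X) $$ (i,j) = (\<Sum>k = 0..<n. M $$ (i,k) * X $$ (k,j))"
    using M Xc i j by (simp add: scalar_prod_def)
  also have "\<dots> = (\<Sum>k = nb j..<nb (Suc j). M $$ (i,k) * X $$ (k,j))"
    by (rule sum.mono_neutral_right, insert bn Xz, auto)
  also have "\<dots> = (\<Sum>c = 0..<nb (Suc j) - nb j. M $$ (i, nb j + c) * X $$ (nb j + c, j))"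
    by (subst sum.atLeastLessThan_shift_0, simp add: o_def)
  finally show ?thesis .
qed

lemma part_iv_col:
  assumes bs: "block_structure n m nb" and j: "j < m"
    and A: "A \<in> carrier_mat n n" and C: "C \<in> carrier_mat n n"
    and but: "block_upper_triangular n m nb C"
    and Bs: "Bs \<in> carrier_mat (nb (Suc j)) (nb (Suc j))"
    and CB: "block_col_upper nb j C = Bs * block_col_upper nb j A"
    and X: "X \<in> Db n m nb"
  shows "col (C * X) j \<bullet> col (C * X) j \<le> (spectral_norm Bs)^2 * (col (A * X) j \<bullet> col (A * X) j)"
proof -
  define a where "a = nb j"
  define b where "b = nb (Suc j)"
  define L where "L = b - a"
  have Xc: "X \<in> carrier_mat n m" by (rule Db_carrier[OF X])
  have bn: "b \<le> n" unfolding b_def using bs_le_n[OF bs, of "Suc j"] j by simp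
  define t where "t = vec L (\<lambda>c. X $$ (a + c, j))"
  have t: "t \<in> carrier_vec L" unfolding t_def by simp
  define UA where "UA = block_col_upper nb j A"
  have UA: "UA \<in> carrier_mat b L" unfolding UA_def block_col_upper_def L_def a_def b_def by simp
  have UAt: "(UA *\<^sub>v t) $ i = (A * X) $$ (i,j)" if i: "i < b" for i
  proof -
    have "(UA *\<^sub>v t) $ i = (\<Sum>c = 0..<L. A $$ (i, a + c) * X $$ (a + c, j))"
      using i UA t unfolding UA_def t_def block_col_upper_def L_def a_def b_def
      by (auto simp: scalar_prod_def intro!: sum.cong)
    also have "\<dots> = (A * X) $$ (i,j)" unfolding L_def a_def b_def
      by (rule col_sum_block[OF bs X j A, symmetric], insert i bn, auto simp: b_def)
    finally show ?thesis .
  qed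
  have UCt: "(Bs *\<^sub>v (UA *\<^sub>v t)) $ i = (C * X) $$ (i,j)" if i: "i < b" for i
  proof -
    have "Bs *\<^sub>v (UA *\<^sub>v t) = block_col_upper nb j C *\<^sub>v t" unfolding CB UA_def[symmetric]
      using Bs UA t by (simp add: assoc_mult_mat_vec[of _ b b _ L] b_def)
    also have "(\<dots>) $ i = (\<Sum>c = 0..<L. C $$ (i, a + c) * X $$ (a + c, j))"
      using i t unfolding t_def block_col_upper_def L_def a_def b_def
      by (auto simp: scalar_prod_def intro!: sum.cong)
    also have "\<dots> = (C * X) $$ (i,j)" unfolding L_def a_def b_def
      by (rule col_sum_block[OF bs X j C, symmetric], insert i bn, auto simp: b_def)
    finally show ?thesis .
  qed
  have CX0: "(C * X) $$ (i,j) = 0" if i: "b \<le> i" "i < n" for i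
  proof -
    from bs_exists[OF bs i(2)] obtain r where r: "r < m" "nb r \<le> i" "i < nb (Suc r)" by auto
    have jr: "j < r"
    proof (rule ccontr)
      assume "\<not> j < r"
      hence "Suc r \<le> Suc j" by simp
      hence "nb (Suc r) \<le> nb (Suc j)" using bs_mono[OF bs _ ] j by auto
      thus False using r i unfolding b_def by simp
    qed
    have "(C * X) $$ (i,j) = (\<Sum>c = 0..<L. C $$ (i, a + c) * X $$ (a + c, j))"
      unfolding L_def a_def b_def by (rule col_sum_block[OF bs X j C], insert i, auto)
    also have "\<dots> = 0"
    proof (rule sum.neutral, intro ballI)
      fix c assume c: "c \<in> {0..<L}"
      have bu: "\<forall>i c. nb r \<le> i \<and> i < nb (Suc r) \<and> nb j \<le> c \<and> c < nb (Suc j) \<longrightarrow> C $$ (i, c) = 0"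
        using but r(1) jr j unfolding block_upper_triangular_def by blast
      have ac: "nb j + c < nb (Suc j)" using c unfolding L_def a_def b_def by simp
      have "C $$ (i, nb j + c) = 0" using bu[rule_format, of i "nb j + c"] r ac by simp
      hence "C $$ (i, a + c) = 0" unfolding a_def .
      thus "C $$ (i, a + c) * X $$ (a + c, j) = 0" by simp
    qed
    finally show ?thesis .
  qed
  have w: "UA *\<^sub>v t \<in> carrier_vec b" using UA t by auto
  have Bsb: "Bs \<in> carrier_mat b b" using Bs unfolding b_def .
  have colC: "col (C * X) j \<in> carrier_vec n" and colA: "col (A * X) j \<in> carrier_vec n"
    using C A Xc j by auto
  have "col (C * X) j \<bullet> col (C * X) j = (\<Sum>i<n. ((C * X) $$ (i,j))^2)"
    unfolding vv_sum[OF colC] using C Xc j by simp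
  also have "\<dots> = (\<Sum>i<b. ((C * X) $$ (i,j))^2)"
    by (rule sum.mono_neutral_right, insert bn CX0, auto)
  also have "\<dots> = (\<Sum>i<b. ((Bs *\<^sub>v (UA *\<^sub>v t)) $ i)^2)" by (rule sum.cong, auto simp: UCt)
  also have "\<dots> = (Bs *\<^sub>v (UA *\<^sub>v t)) \<bullet> (Bs *\<^sub>v (UA *\<^sub>v t))"
    by (rule vv_sum[symmetric], insert Bsb w, auto)
  also have "\<dots> \<le> (spectral_norm Bs)^2 * ((UA *\<^sub>v t) \<bullet> (UA *\<^sub>v t))" by (rule sn_bound[OF Bsb w])
  also have "(UA *\<^sub>v t) \<bullet> (UA *\<^sub>v t) = (\<Sum>i<b. ((A * X) $$ (i,j))^2)"
    unfolding vv_sum[OF w] by (rule sum.cong, auto simp: UAt)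
  also have "\<dots> \<le> (\<Sum>i<n. ((A * X) $$ (i,j))^2)"
    by (rule sum_mono2, insert bn, auto)
  also have "\<dots> = col (A * X) j \<bullet> col (A * X) j"
    unfolding vv_sum[OF colA] using A Xc j by simp
  finally show ?thesis by (simp add: mult_left_mono)
qed


lemma part_iv:
  assumes bs: "block_structure n m nb" and m: "0 < m"
    and A: "A \<in> carrier_mat n n" and C: "C \<in> carrier_mat n n"
    and but: "block_upper_triangular n m nb C"
    and Bs: "\<forall>j<m. Bs j \<in> carrier_mat (nb (Suc j)) (nb (Suc j)) \<and>
                   block_col_upper nb j C = Bs j * block_col_upper nb j A"
  shows "block_norm n m nb 2 C \<le> (MAX j\<in>{..<m}. spectral_norm (Bs j)) * block_norm n m nb 2 A"
proof (rule bn_least)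
  define \<beta> where "\<beta> = (MAX j\<in>{..<m}. spectral_norm (Bs j))"
  have bge: "spectral_norm (Bs j) \<le> \<beta>" if "j < m" for j
    unfolding \<beta>_def by (rule Max_ge, insert that, auto)
  have b0: "0 \<le> \<beta>" using bge[OF m] sn_nonneg[of "Bs 0"] by linarith
  fix X assume X: "X \<in> Db n m nb" and sX: "spectral_norm X \<le> 1"
  have Xc: "X \<in> carrier_mat n m" by (rule Db_carrier[OF X])
  have CX: "C * X \<in> carrier_mat n m" and AX: "A * X \<in> carrier_mat n m" using A C Xc by auto
  have colb: "col (C * X) j \<bullet> col (C * X) j \<le> \<beta>^2 * (col (A * X) j \<bullet> col (A * X) j)" if j: "j < m" for j
  proof -
    have "col (C * X) j \<bullet> col (C * X) j \<le> (spectral_norm (Bs j))^2 * (col (A * X) j \<bullet> col (A * X) j)"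
      by (rule part_iv_col[OF bs j A C but _ _ X], insert Bs j, auto)
    also have "\<dots> \<le> \<beta>^2 * (col (A * X) j \<bullet> col (A * X) j)"
      by (rule mult_right_mono[OF power_mono[OF bge[OF j] sn_nonneg] vv_ge0])
    finally show ?thesis .
  qed
  have "schatten_norm 2 (C * X) = sqrt (\<Sum>j<m. col (C * X) j \<bullet> col (C * X) j)" by (rule sch2_frob[OF CX])
  also have "\<dots> \<le> sqrt (\<Sum>j<m. \<beta>^2 * (col (A * X) j \<bullet> col (A * X) j))"
    by (rule real_sqrt_le_mono, rule sum_mono, rule colb, simp)
  also have "\<dots> = \<beta> * sqrt (\<Sum>j<m. col (A * X) j \<bullet> col (A * X) j)"
    using b0 by (simp add: sum_distrib_left[symmetric] real_sqrt_mult)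
  also have "sqrt (\<Sum>j<m. col (A * X) j \<bullet> col (A * X) j) = schatten_norm 2 (A * X)" by (rule sch2_frob[OF AX, symmetric])
  also have "\<beta> * \<dots> \<le> \<beta> * block_norm n m nb 2 A" by (rule mult_left_mono[OF bn_upper[OF A _ X sX] b0], simp)
  finally show "schatten_norm 2 (C * X) \<le> (MAX j\<in>{..<m}. spectral_norm (Bs j)) * block_norm n m nb 2 A"
    unfolding \<beta>_def .
qed

theorem mainTheorem9:
  fixes n m :: nat and nb :: "nat \<Rightarrow> nat" and p :: nat and A B :: "real mat"
  assumes "block_structure n m nb" and "0 < m"
    and "1 \<le> p"
    and "A \<in> carrier_mat n n" and "B \<in> carrier_mat n n"
  shows "block_norm n m nb p (A * B) \<le> spectral_norm A * block_norm n m nb p B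
    \<and> (spectral_norm A \<le> block_norm n m nb p A \<and> block_norm_inf n m nb A = spectral_norm A)
    \<and> block_norm n m nb p A \<le> real m powr (1 / real p) * spectral_norm A
    \<and> (\<forall>C Bs. C \<in> carrier_mat n n \<and> block_upper_triangular n m nb C \<and>
            (\<forall>j<m. Bs j \<in> carrier_mat (nb (Suc j)) (nb (Suc j)) \<and>
                   block_col_upper nb j C = Bs j * block_col_upper nb j A)
          \<longrightarrow> block_norm n m nb 2 C \<le>
                (MAX j\<in>{..<m}. spectral_norm (Bs j)) * block_norm n m nb 2 A)"
  using part_i[OF assms(4,5,3)] part_ii_a[OF assms(1,2,4,3)] part_ii_b[OF assms(1,2,4)]
    part_iii[OF assms(4,3)] part_iv[OF assms(1,2,4)] by blast


end
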